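(* Consider the problem and algorithm AC2CD described in the context (including the additional requirement on $A^{k,i}$), and assume that $f$ is convex over $\mathbb{R}^n$. Let $f^*$ be the optimal value of the problem and define \[ K=\max\Bigl\{\frac1{A_l},\frac{L^{\max}}{2\delta(1-\gamma)}\Bigr\}R_0+2\hat L R_0+G^*. \] Then at every outer iteration $k$, \[ f(x^k)-f(x^{k+1})\ge\frac{\gamma\,(f(x^{k+1})-f^* )^2}{A_u(n-1)K^2}. \]
   Context: Problem: minimize $f(x)$ subject to $e^T x = b$ and $l_i \le x_i \le u_i$ ($i=1,\dots,n$), where $n\ge 2$, $e$ is the all-ones vector, $b\in\mathbb{R}$, $l_i\in\mathbb{R}\cup\{-\infty\}$, $u_i\in\mathbb{R}\cup\{+\infty\}$, $l_i<u_i$, and $f:\mathbb{R}^n\to\mathbb{R}$ is continuously differentiable with $\nabla f$ Lipschitz continuous on $\mathbb{R}^n$. $\mathcal F$ is the feasible set, $e_i$ the $i$th unit vector. For $i\ne j$, $L_{i,j}>0$ are fixed constants such that for every $x\in\mathbb{R}^n$ and $s,t\in\mathbb{R}$, $|\nabla f(x+s(e_i-e_j))^T(e_i-e_j)-\nabla f(x+t(e_i-e_j))^T(e_i-e_j)|\le L_{i,j}|s-t|$; $L_{i,i}=0$; $L^{\max}=\max_{i,j}L_{i,j}$; $L_j=\sum_{i=1}^nL_{i,j}$; $\hat L=\max_jL_j$. $\|x\|_{\langle j\rangle}=\sqrt{\sum_{i\ne j}x_i^2}$. For $x\in\mathcal F$, $D_h(x)=\min\{x_h-l_h,u_h-x_h\}$.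 A point $x^*\in\mathcal F$ is stationary iff there is $\lambda^*\in\mathbb{R}$ with $\nabla_i f(x^* )\ge\lambda^*$ if $x^*_i=l_i$, $=\lambda^*$ if $l_i<x^*_i<u_i$, $\le\lambda^*$ if $x^*_i=u_i$; $X^*$ is the set of stationary points. With $\mathcal L_0=\{x\in\mathcal F: f(x)\le f(x^0)\}$, define $R_0=\max\{\|x-x^*\|_{\langle j\rangle}: j\in\{1,\dots,n\},\ x\in\mathcal L_0,\ x^*\in X^*\}$ and $G^*=\max\{\nabla_jf(x^* )-\nabla_if(x^* ): i,j\in\{1,\dots,n\},\ x^*\in X^*\}$. Algorithm AC2CD with parameters $\tau\in(0,1]$, $\gamma,\delta\in(0,1)$, $0<A_l\le A_u<\infty$ and starting point $x^0\in\mathcal F$: for $k=0,1,2,\dots$: let $D^k=\max_h D_h(x^k)$; choose $j(k)$ with $D_{j(k)}(x^k)\ge\tau D^k$; choose a permutation $(p^k_1,\dots,p^k_n)$ of $\{1,\dots,n\}$; set $z^{k,1}=x^k$; for $i=1,\dots,n$ (inner iteration $(k,i)$): $g^{k,i}=\nabla_{j(k)}f(z^{k,i})-\nabla_{p^k_i}f(z^{k,i})$, $d^{k,i}=g^{k,i}(e_{p^k_i}-e_{j(k)})$; $\bar\alpha^{k,i}=\min\{u_{p^k_i}-z^{k,i}_{p^k_i},z^{k,i}_{j(k)}-l_{j(k)}\}/g^{k,i}$ if $g^{k,i}>0$, $=\min\{z^{k,i}_{p^k_i}-l_{p^k_i},u_{j(k)}-z^{k,i}_{j(k)}\}/|g^{k,i}|$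 if $g^{k,i}<0$, $=0$ if $g^{k,i}=0$; choose $A^{k,i}\in[A_l,A_u]$, set $\Delta^{k,i}=\min\{\bar\alpha^{k,i},A^{k,i}\}$; starting from $\alpha=\Delta^{k,i}$, while $f(z^{k,i}+\alpha d^{k,i})>f(z^{k,i})+\gamma\alpha\nabla f(z^{k,i})^Td^{k,i}$ replace $\alpha$ by $\delta\alpha$; $\alpha^{k,i}$ is the final $\alpha$ and $z^{k,i+1}=z^{k,i}+\alpha^{k,i}d^{k,i}$. Then $x^{k+1}=z^{k,n+1}$. Additional requirement: the values $A^{k,i}\in[A_l,A_u]$ are chosen so that $l_{j(k)}<z^{k,i}_{j(k)}<u_{j(k)}$ for all $k\ge0$ and $i=1,\dots,n+1$. Standing assumptions: $\mathcal L_0$ is nonempty and compact, and every $x\in\mathcal L_0$ has some index $i$ with $l_i<x_i<u_i$. *)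

theory Defs
  imports "HOL-Analysis.Analysis"
begin

text \<open>Vectors in R^n are modelled as real^'n for a finite index type 'n (n = CARD('n)).
  Bounds l, u take values in the extended reals (l i may be -\<infinity>, u i may be +\<infinity>).
  The function grad is the gradient of f (imposed in the theorem via has_derivative).\<close>

definition feas :: "real \<Rightarrow> ('n::finite \<Rightarrow> ereal) \<Rightarrow> ('n \<Rightarrow> ereal) \<Rightarrow> (real^'n) set" where
  "feas b l u = {x. (\<Sum>i\<in>UNIV. x$i) = b \<and> (\<forall>i. l i \<le> ereal (x$i) \<and> ereal (x$i) \<le> u i)}"

definition level0 :: "(real^'n::finite \<Rightarrow> real) \<Rightarrow> real \<Rightarrow> ('n \<Rightarrow> ereal) \<Rightarrow> ('n \<Rightarrow> ereal) \<Rightarrow> real^'n \<Rightarrow> (real^'n) set" where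
  "level0 f b l u x0 = {x \<in> feas b l u. f x \<le> f x0}"

definition Dh :: "('n::finite \<Rightarrow> ereal) \<Rightarrow> ('n \<Rightarrow> ereal) \<Rightarrow> real^'n \<Rightarrow> 'n \<Rightarrow> ereal" where
  "Dh l u x h = min (ereal (x$h) - l h) (u h - ereal (x$h))"

definition stationary :: "(real^'n::finite \<Rightarrow> real^'n) \<Rightarrow> real \<Rightarrow> ('n \<Rightarrow> ereal) \<Rightarrow> ('n \<Rightarrow> ereal) \<Rightarrow> real^'n \<Rightarrow> bool" where
  "stationary grad b l u x \<longleftrightarrow> x \<in> feas b l u \<and>
     (\<exists>lam::real. \<forall>i.
        (ereal (x$i) = l i \<longrightarrow> grad x $ i \<ge> lam) \<and>
        (l i < ereal (x$i) \<and> ereal (x$i) < u i \<longrightarrow> grad x $ i = lam) \<and>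
        (ereal (x$i) = u i \<longrightarrow> grad x $ i \<le> lam))"

definition Xstar :: "(real^'n::finite \<Rightarrow> real^'n) \<Rightarrow> real \<Rightarrow> ('n \<Rightarrow> ereal) \<Rightarrow> ('n \<Rightarrow> ereal) \<Rightarrow> (real^'n) set" where
  "Xstar grad b l u = {x. stationary grad b l u x}"

definition norm_ex :: "'n::finite \<Rightarrow> real^'n \<Rightarrow> real" where
  "norm_ex j x = sqrt (\<Sum>i\<in>UNIV - {j}. (x$i)^2)"

definition R0 :: "(real^'n::finite \<Rightarrow> real) \<Rightarrow> (real^'n \<Rightarrow> real^'n) \<Rightarrow> real \<Rightarrow> ('n \<Rightarrow> ereal) \<Rightarrow> ('n \<Rightarrow> ereal) \<Rightarrow> real^'n \<Rightarrow> real" where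
  "R0 f grad b l u x0 = Sup {norm_ex j (x - xs) | j x xs. x \<in> level0 f b l u x0 \<and> xs \<in> Xstar grad b l u}"

definition Gstar :: "(real^'n::finite \<Rightarrow> real^'n) \<Rightarrow> real \<Rightarrow> ('n \<Rightarrow> ereal) \<Rightarrow> ('n \<Rightarrow> ereal) \<Rightarrow> real" where
  "Gstar grad b l u = Sup {grad xs $ j - grad xs $ i | i j xs. xs \<in> Xstar grad b l u}"

definition Lmax :: "('n::finite \<Rightarrow> 'n \<Rightarrow> real) \<Rightarrow> real" where
  "Lmax Lc = Max {Lc i j | i j. True}"

definition Lhat :: "('n::finite \<Rightarrow> 'n \<Rightarrow> real) \<Rightarrow> real" where
  "Lhat Lc = Max (range (\<lambda>j. \<Sum>i\<in>UNIV. Lc i j))"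

text \<open>Maximal feasible stepsize \<bar>\<alpha>\<close>
definition abar :: "('n::finite \<Rightarrow> ereal) \<Rightarrow> ('n \<Rightarrow> ereal) \<Rightarrow> 'n \<Rightarrow> 'n \<Rightarrow> real^'n \<Rightarrow> real \<Rightarrow> ereal" where
  "abar l u j p z g =
    (if g > 0 then min (u p - ereal (z$p)) (ereal (z$j) - l j) / ereal g
     else if g < 0 then min (ereal (z$p) - l p) (u j - ereal (z$j)) / ereal \<bar>g\<bar>
     else 0)"

definition armijo :: "(real^'n::finite \<Rightarrow> real) \<Rightarrow> (real^'n \<Rightarrow> real^'n) \<Rightarrow> real \<Rightarrow> real^'n \<Rightarrow> real^'n \<Rightarrow> real \<Rightarrow> bool" where
  "armijo f grad \<gamma> z d a \<longleftrightarrow> f (z + a *\<^sub>R d) \<le> f z + \<gamma> * a * (grad z \<bullet> d)"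

text \<open>A run of AC2CD: x outer iterates, j the chosen index j(k), p k the permutation
  (p k i = p^k_i for i = 1..n), A the trial values A^{k,i}, z the inner iterates z^{k,i},
  \<alpha> the accepted steps \<alpha>^{k,i}.\<close>
definition AC2CD_run ::
  "(real^'n::finite \<Rightarrow> real) \<Rightarrow> (real^'n \<Rightarrow> real^'n) \<Rightarrow> ('n \<Rightarrow> ereal) \<Rightarrow> ('n \<Rightarrow> ereal) \<Rightarrow>
   real \<Rightarrow> real \<Rightarrow> real \<Rightarrow> real \<Rightarrow> real \<Rightarrow>
   (nat \<Rightarrow> real^'n) \<Rightarrow> (nat \<Rightarrow> 'n) \<Rightarrow> (nat \<Rightarrow> nat \<Rightarrow> 'n) \<Rightarrow> (nat \<Rightarrow> nat \<Rightarrow> real) \<Rightarrow>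
   (nat \<Rightarrow> nat \<Rightarrow> real^'n) \<Rightarrow> (nat \<Rightarrow> nat \<Rightarrow> real) \<Rightarrow> bool" where
  "AC2CD_run f grad l u \<tau> \<gamma> \<delta> Al Au x j p A z \<alpha> \<longleftrightarrow>
    (\<forall>k. Dh l u (x k) (j k) \<ge> ereal \<tau> * Max (range (Dh l u (x k)))) \<and>
    (\<forall>k. bij_betw (p k) {1..CARD('n)} UNIV) \<and>
    (\<forall>k. z k 1 = x k \<and> x (Suc k) = z k (CARD('n) + 1)) \<and>
    (\<forall>k i. 1 \<le> i \<and> i \<le> CARD('n) \<longrightarrow>
      (let g = grad (z k i) $ j k - grad (z k i) $ p k i;
           d = g *\<^sub>R (axis (p k i) 1 - axis (j k) 1);
           \<Delta> = real_of_ereal (min (abar l u (j k) (p k i) (z k i) g) (ereal (A k i)))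
       in Al \<le> A k i \<and> A k i \<le> Au \<and>
          (\<exists>m::nat. \<alpha> k i = \<delta>^m * \<Delta> \<and> armijo f grad \<gamma> (z k i) d (\<delta>^m * \<Delta>) \<and>
             (\<forall>m'<m. \<not> armijo f grad \<gamma> (z k i) d (\<delta>^m' * \<Delta>))) \<and>
          z k (Suc i) = z k i + \<alpha> k i *\<^sub>R d))"

end

theory Submission
  imports Defs
begin


lemma line_deriv:
  fixes f :: "real^'n::finite \<Rightarrow> real"
  assumes grad: "\<forall>y. (f has_derivative (\<lambda>h. grad y \<bullet> h)) (at y)"
  shows "((\<lambda>t. f (x + t *\<^sub>R v)) has_real_derivative (grad (x + t *\<^sub>R v) \<bullet> v)) (at t)"
proof -
  have d1: "((\<lambda>t. x + t *\<^sub>R v) has_derivative (\<lambda>h. h *\<^sub>R v)) (at t)"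
    by (auto intro!: derivative_eq_intros)
  have "((\<lambda>t. f (x + t *\<^sub>R v)) has_derivative (\<lambda>h. grad (x + t *\<^sub>R v) \<bullet> (h *\<^sub>R v))) (at t)"
    using has_derivative_compose[OF d1 grad[rule_format]] by (simp add: o_def)
  moreover have "(\<lambda>h. grad (x + t *\<^sub>R v) \<bullet> (h *\<^sub>R v)) = (\<lambda>h. (grad (x + t *\<^sub>R v) \<bullet> v) * h)"
    by (auto simp: inner_scaleR_right)
  ultimately show ?thesis by (simp add: has_field_derivative_def)
qed

lemma grad_ineq:
  fixes f :: "real^'n::finite \<Rightarrow> real"
  assumes grad: "\<forall>y. (f has_derivative (\<lambda>h. grad y \<bullet> h)) (at y)"
    and cvx: "convex_on UNIV f"
  shows "f w \<ge> f x + grad x \<bullet> (w - x)"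
proof -
  let ?phi = "\<lambda>t. f (x + t *\<^sub>R (w - x))"
  have c: "convex_on UNIV ?phi"
  proof (rule convex_onI)
    fix t a b :: real assume t: "0 < t" "t < 1"
    have "x + ((1 - t) * a + t * b) *\<^sub>R (w - x) = (1 - t) *\<^sub>R (x + a *\<^sub>R (w - x)) + t *\<^sub>R (x + b *\<^sub>R (w - x))"
      by (simp add: algebra_simps)
    then show "?phi ((1 - t) *\<^sub>R a + t *\<^sub>R b) \<le> (1 - t) * ?phi a + t * ?phi b"
      using convex_onD[OF cvx, of t "x + a *\<^sub>R (w - x)" "x + b *\<^sub>R (w - x)"] t by simp
  qed auto
  have d: "(?phi has_field_derivative (grad x \<bullet> (w - x))) (at 0 within UNIV)"
    using line_deriv[OF grad, of x "w - x" 0] by simp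
  have "?phi 1 - ?phi 0 \<ge> (grad x \<bullet> (w - x)) * (1 - 0)"
    by (rule convex_on_imp_above_tangent[OF c _ _ _ d]) auto
  then show ?thesis by simp
qed

lemma descent1d:
  fixes f :: "real^'n::finite \<Rightarrow> real"
  assumes grad: "\<forall>y. (f has_derivative (\<lambda>h. grad y \<bullet> h)) (at y)"
    and lip: "\<And>s t. \<bar>grad (y + s *\<^sub>R w) \<bullet> w - grad (y + t *\<^sub>R w) \<bullet> w\<bar> \<le> L * \<bar>s - t\<bar>"
  shows "f (y + t *\<^sub>R w) \<le> f y + t * (grad y \<bullet> w) + L * t^2 / 2"
proof -
  define psi where "psi s = f (y + s *\<^sub>R w) - f y - s * (grad y \<bullet> w) - L * s^2 / 2" for s
  have dpsi: "DERIV psi s :> (grad (y + s *\<^sub>R w) \<bullet> w - grad y \<bullet> w - L * s)" for s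
    unfolding psi_def
    by (rule derivative_eq_intros line_deriv[OF grad] | simp)+
  have l0: "grad (y + s *\<^sub>R w) \<bullet> w - grad y \<bullet> w \<le> L * \<bar>s\<bar>"
       "grad (y + s *\<^sub>R w) \<bullet> w - grad y \<bullet> w \<ge> - L * \<bar>s\<bar>" for s
    using lip[of s 0] by auto
  show ?thesis
  proof (cases "t \<ge> 0")
    case True
    have "psi t \<le> psi 0"
    proof (rule DERIV_nonpos_imp_nonincreasing[of 0 t psi, OF True])
      fix s assume "0 \<le> s" "s \<le> t"
      then show "\<exists>y. DERIV psi s :> y \<and> y \<le> 0" using dpsi[of s] l0(1)[of s] by (auto simp: abs_of_nonneg)
    qed
    then show ?thesis by (simp add: psi_def)
  next
    case False
    have "psi t \<le> psi 0"
    proof (rule DERIV_nonneg_imp_nondecreasing[of t 0 psi])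
      show "t \<le> 0" using False by simp
    next
      fix s assume "t \<le> s" "s \<le> 0"
      then show "\<exists>y. DERIV psi s :> y \<and> y \<ge> 0" using dpsi[of s] l0(2)[of s] by (auto simp: abs_of_nonpos)
    qed
    then show ?thesis by (simp add: psi_def)
  qed
qed

lemma sum_axis_expand:
  fixes h :: "real^'n::finite"
  assumes "sum (\<lambda>i. h$i) UNIV = 0"
  shows "(\<Sum>a\<in>UNIV - {j}. (h$a) *\<^sub>R (axis a 1 - axis j 1)) = h"
proof (subst vec_eq_iff, intro allI)
  fix c
  have "(\<Sum>a\<in>UNIV - {j}. (h$a) *\<^sub>R (axis a 1 - axis j 1)) $ c
      = (\<Sum>a\<in>UNIV - {j}. h$a * ((if a = c then 1 else 0) - (if j = c then 1 else 0)))"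
    by (auto simp: sum_component axis_def intro!: sum.cong split: if_splits)
  also have "\<dots> = h$c"
  proof (cases "c = j")
    case True
    have "(\<Sum>a\<in>UNIV - {j}. h$a) = (\<Sum>a\<in>UNIV. h$a) - h$j"
      by (simp add: sum_diff1)
    then have "(\<Sum>a\<in>UNIV - {j}. h$a) = - h$j" using assms by simp
    moreover have "(\<Sum>a\<in>UNIV - {j}. h$a * ((if a = c then 1 else 0) - (if j = c then 1 else 0)))
       = - (\<Sum>a\<in>UNIV - {j}. h$a)" using True by (simp add: sum_negf)
    ultimately show ?thesis using True by simp
  next
    case False
    have "(\<Sum>a\<in>UNIV - {j}. h$a * ((if a = c then 1 else 0) - (if j = c then 1 else 0)))
        = (\<Sum>a\<in>UNIV - {j}. if a = c then h$a else 0)"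
      using False by (intro sum.cong) auto
    also have "\<dots> = h$c" using False by (simp add: sum.delta)
    finally show ?thesis .
  qed
  finally show "(\<Sum>a\<in>UNIV - {j}. (h$a) *\<^sub>R (axis a 1 - axis j 1)) $ c = h$c" .
qed

lemma inner_w: "(g::real^'n::finite) \<bullet> (axis a 1 - axis j 1) = g$a - g$j"
  by (simp add: inner_diff_right inner_axis)

lemma upper_sub:
  fixes f :: "real^'n::finite \<Rightarrow> real"
  assumes n2: "CARD('n) \<ge> 2"
    and grad: "\<forall>y. (f has_derivative (\<lambda>h. grad y \<bullet> h)) (at y)"
    and Lc_pos: "\<forall>i i'. i \<noteq> i' \<longrightarrow> Lc i i' > 0"
    and Lc_diag: "\<forall>i. Lc i i = 0"
    and Lc_lip: "\<forall>i i' y s t. i \<noteq> i' \<longrightarrow>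
        \<bar>grad (y + s *\<^sub>R (axis i 1 - axis i' 1)) \<bullet> (axis i 1 - axis i' 1)
         - grad (y + t *\<^sub>R (axis i 1 - axis i' 1)) \<bullet> (axis i 1 - axis i' 1)\<bar> \<le> Lc i i' * \<bar>s - t\<bar>"
    and cvx: "convex_on UNIV f"
    and h0: "sum (\<lambda>i. h$i) UNIV = 0"
  shows "f (y + h) \<le> f y + grad y \<bullet> h + (\<Sum>a\<in>UNIV. Lc a j) / 2 * (\<Sum>a\<in>UNIV - {j}. (h$a)^2)"
proof -
  define U where "U = (UNIV::'n set) - {j}"
  define S where "S = (\<Sum>a\<in>UNIV. Lc a j)"
  have finU: "finite U" unfolding U_def by simp
  have SU: "S = (\<Sum>a\<in>U. Lc a j)"
    unfolding S_def U_def using Lc_diag by (simp add: sum_diff1)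
  have cardU: "card U \<ge> 1" unfolding U_def using n2 by (simp add: card_Diff_singleton)
  then have Une: "U \<noteq> {}" by auto
  have Lpos: "a \<in> U \<Longrightarrow> Lc a j > 0" for a unfolding U_def using Lc_pos by auto
  have Spos: "S > 0" unfolding SU using Une finU Lpos by (simp add: sum_pos)
  define lam where "lam a = Lc a j / S" for a
  define w where "w a = axis a (1::real) - axis j 1" for a :: 'n
  define q where "q a = y + (h$a / lam a) *\<^sub>R w a" for a
  have lampos: "a \<in> U \<Longrightarrow> lam a > 0" for a unfolding lam_def using Lpos Spos by simp
  have lamsum: "(\<Sum>a\<in>U. lam a) = 1" unfolding lam_def using Spos
    by (simp add: SU sum_divide_distrib[symmetric])
  have "(\<Sum>a\<in>U. lam a *\<^sub>R q a) = (\<Sum>a\<in>U. lam a *\<^sub>R y + (h$a) *\<^sub>R w a)"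
    unfolding q_def using lampos by (intro sum.cong) (auto simp: scaleR_add_right dest: lampos)
  also have "\<dots> = (\<Sum>a\<in>U. lam a) *\<^sub>R y + (\<Sum>a\<in>U. (h$a) *\<^sub>R w a)"
    by (simp add: sum.distrib scaleR_sum_left)
  also have "\<dots> = y + h" using sum_axis_expand[OF h0, of j] lamsum unfolding U_def w_def by simp
  finally have comb: "(\<Sum>a\<in>U. lam a *\<^sub>R q a) = y + h" .
  have "f (y + h) \<le> (\<Sum>a\<in>U. lam a * f (q a))"
    unfolding comb[symmetric]
    by (rule convex_on_sum[OF finU Une cvx lamsum]) (use lampos less_imp_le in auto)
  also have "\<dots> \<le> (\<Sum>a\<in>U. lam a * (f y + (h$a / lam a) * (grad y \<bullet> w a) + Lc a j * (h$a / lam a)^2 / 2))"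
  proof (rule sum_mono)
    fix a assume a: "a \<in> U"
    have "f (q a) \<le> f y + (h$a / lam a) * (grad y \<bullet> w a) + Lc a j * (h$a / lam a)^2 / 2"
      unfolding q_def
      by (rule descent1d[OF grad]) (use Lc_lip a in \<open>auto simp: U_def w_def\<close>)
    then show "lam a * f (q a) \<le> lam a * (f y + (h$a / lam a) * (grad y \<bullet> w a) + Lc a j * (h$a / lam a)^2 / 2)"
      using lampos[OF a] by simp
  qed
  also have "\<dots> = (\<Sum>a\<in>U. lam a * f y + (h$a) * (grad y \<bullet> w a) + S / 2 * (h$a)^2)"
  proof (rule sum.cong)
    fix a assume a: "a \<in> U"
    have "lam a * (Lc a j * (h$a / lam a)^2 / 2) = S / 2 * (h$a)^2"
      using lampos[OF a] Spos Lpos[OF a] unfolding lam_def by (simp add: field_simps power2_eq_square)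
    then show "lam a * (f y + (h$a / lam a) * (grad y \<bullet> w a) + Lc a j * (h$a / lam a)^2 / 2)
        = lam a * f y + (h$a) * (grad y \<bullet> w a) + S / 2 * (h$a)^2"
      using lampos[OF a] by (simp add: field_simps)
  qed simp
  also have "\<dots> = f y + grad y \<bullet> (\<Sum>a\<in>U. (h$a) *\<^sub>R w a) + S / 2 * (\<Sum>a\<in>U. (h$a)^2)"
proof -
    have "(\<Sum>a\<in>U. lam a * f y) = f y" by (simp add: sum_distrib_right[symmetric] lamsum)
    moreover have "(\<Sum>a\<in>U. (h$a) * (grad y \<bullet> w a)) = grad y \<bullet> (\<Sum>a\<in>U. (h$a) *\<^sub>R w a)"
      by (simp add: inner_sum_right)
    moreover have "(\<Sum>a\<in>U. S / 2 * (h$a)^2) = S / 2 * (\<Sum>a\<in>U. (h$a)^2)"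
      by (simp add: sum_distrib_left)
    ultimately show ?thesis by (simp add: sum.distrib)
  qed
  also have "\<dots> = f y + grad y \<bullet> h + S / 2 * (\<Sum>a\<in>U. (h$a)^2)"
    using sum_axis_expand[OF h0, of j] unfolding U_def w_def by simp
  finally show ?thesis unfolding S_def U_def .
qed

definition Dv :: "(real^'n::finite \<Rightarrow> real^'n) \<Rightarrow> 'n \<Rightarrow> real^'n \<Rightarrow> real^'n" where
  "Dv grad j w = (\<chi> h. grad w $ h - grad w $ j)"

definition pj :: "'n::finite \<Rightarrow> real^'n \<Rightarrow> real^'n" where
  "pj j v = (\<chi> h. if h = j then 0 else v$h)"

lemma Dv_j[simp]: "Dv grad j w $ j = 0" by (simp add: Dv_def)

lemma inner_Dv:
  assumes "sum (\<lambda>i. v$i) UNIV = 0"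
  shows "grad w \<bullet> v = Dv grad j w \<bullet> v"
proof -
  have "Dv grad j w \<bullet> v = (\<Sum>i\<in>UNIV. grad w $ i * v$i) - grad w $ j * (\<Sum>i\<in>UNIV. v$i)"
    by (simp add: Dv_def inner_vec_def algebra_simps sum_subtractf sum_distrib_left)
  then show ?thesis using assms by (simp add: inner_vec_def)
qed

lemma inner_pj:
  assumes "G $ j = 0"
  shows "G \<bullet> v = G \<bullet> pj j v"
  unfolding inner_vec_def pj_def using assms by (intro sum.cong) auto

lemma norm_pj: "norm (pj j v) = norm_ex j v"
proof -
  have "(norm (pj j v))^2 = (\<Sum>i\<in>UNIV. (pj j v $ i)^2)"
    by (simp only: power2_norm_eq_inner inner_vec_def) (simp add: power2_eq_square)
  also have "\<dots> = (pj j v $ j)^2 + (\<Sum>i\<in>UNIV - {j}. (pj j v $ i)^2)"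
    by (rule sum.remove) auto
  also have "\<dots> = (\<Sum>i\<in>UNIV - {j}. (v $ i)^2)"
    by (auto simp: pj_def intro!: sum.cong)
  finally show ?thesis unfolding norm_ex_def by (metis norm_ge_zero real_sqrt_unique)
qed

lemma sq_norm_j0:
  assumes "G $ j = 0"
  shows "(\<Sum>a\<in>UNIV - {j}. (G$a)^2) = (norm G)^2"
proof -
  have "(norm G)^2 = (\<Sum>i\<in>UNIV. (G $ i)^2)"
    by (simp only: power2_norm_eq_inner inner_vec_def) (simp add: power2_eq_square)
  then show ?thesis using assms by (simp add: sum_diff1)
qed

lemma cocoer1:
  fixes f :: "real^'n::finite \<Rightarrow> real"
  assumes n2: "CARD('n) \<ge> 2"
    and grad: "\<forall>y. (f has_derivative (\<lambda>h. grad y \<bullet> h)) (at y)"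
    and Lc_pos: "\<forall>i i'. i \<noteq> i' \<longrightarrow> Lc i i' > 0"
    and Lc_diag: "\<forall>i. Lc i i = 0"
    and Lc_lip: "\<forall>i i' y s t. i \<noteq> i' \<longrightarrow>
        \<bar>grad (y + s *\<^sub>R (axis i 1 - axis i' 1)) \<bullet> (axis i 1 - axis i' 1)
         - grad (y + t *\<^sub>R (axis i 1 - axis i' 1)) \<bullet> (axis i 1 - axis i' 1)\<bar> \<le> Lc i i' * \<bar>s - t\<bar>"
    and cvx: "convex_on UNIV f"
  shows "f y \<ge> f x + grad x \<bullet> (y - x) + (norm (Dv grad j y - Dv grad j x))^2 / (2 * (\<Sum>a\<in>UNIV. Lc a j))"
proof -
  define S where "S = (\<Sum>a\<in>UNIV. Lc a j)"
  have "S = (\<Sum>a\<in>UNIV - {j}. Lc a j)"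
    unfolding S_def using Lc_diag by (simp add: sum_diff1)
  moreover have "card (UNIV - {j}) \<ge> 1" using n2 by (simp add: card_Diff_singleton)
  then have "UNIV - {j} \<noteq> {}" by (metis card.empty not_one_le_zero)
  moreover have "(\<Sum>a\<in>UNIV - {j}. Lc a j) > 0" using calculation(2) Lc_pos by (intro sum_pos) auto
  ultimately have Spos: "S > 0" by simp
  define G where "G = Dv grad j y - Dv grad j x"
  have Gj: "G $ j = 0" by (simp add: G_def)
  define h where "h = G - (\<Sum>i\<in>UNIV. G$i) *\<^sub>R axis j (1::real)"
  have "(\<Sum>i\<in>UNIV. (\<Sum>i\<in>UNIV. G$i) * (if i = j then 1 else 0)) = (\<Sum>i\<in>UNIV. if i = j then (\<Sum>i\<in>UNIV. G$i) else 0)"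
    by (intro sum.cong) auto
  then have hsum: "sum (\<lambda>i. h$i) UNIV = 0"
    by (simp add: h_def sum_subtractf axis_def)
  have ha: "a \<noteq> j \<Longrightarrow> h$a = G$a" for a by (simp add: h_def axis_def)
  have h2: "sum (\<lambda>i. ((-(1/S) *\<^sub>R h)$i)) UNIV = 0" using hsum by (simp add: sum_negf sum_divide_distrib[symmetric])
  have ub: "f (y + (-(1/S)) *\<^sub>R h) \<le> f y + grad y \<bullet> ((-(1/S)) *\<^sub>R h) + S / 2 * (\<Sum>a\<in>UNIV - {j}. (((-(1/S)) *\<^sub>R h)$a)^2)"
    using upper_sub[OF n2 grad Lc_pos Lc_diag Lc_lip cvx h2, of y j] unfolding S_def by simp
  have "(\<Sum>a\<in>UNIV - {j}. (((-(1/S)) *\<^sub>R h)$a)^2) = (1/S)^2 * (\<Sum>a\<in>UNIV - {j}. (G$a)^2)"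
    by (auto simp: sum_distrib_left power_divide ha intro!: sum.cong)
  also have "\<dots> = (1/S)^2 * (norm G)^2" using sq_norm_j0[OF Gj] by simp
  finally have sq: "(\<Sum>a\<in>UNIV - {j}. (((-(1/S)) *\<^sub>R h)$a)^2) = (1/S)^2 * (norm G)^2" .
  have gh: "grad w \<bullet> h = Dv grad j w \<bullet> G" for w
proof -
    have "grad w \<bullet> h = Dv grad j w \<bullet> h" by (rule inner_Dv[OF hsum])
    also have "\<dots> = Dv grad j w \<bullet> G" by (simp add: h_def inner_diff_right inner_axis)
    finally show ?thesis .
  qed
  have gi: "f (y + (-(1/S)) *\<^sub>R h) \<ge> f x + grad x \<bullet> ((y + (-(1/S)) *\<^sub>R h) - x)"
    by (rule grad_ineq[OF grad cvx])
  have e1: "grad x \<bullet> ((y + (-(1/S)) *\<^sub>R h) - x) = grad x \<bullet> (y - x) - (1/S) * (Dv grad j x \<bullet> G)"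
    using gh[of x] by (simp add: inner_diff_right inner_add_right)
  have e2: "grad y \<bullet> ((-(1/S)) *\<^sub>R h) = - (1/S) * (Dv grad j y \<bullet> G)"
    using gh[of y] by simp
  have e3: "Dv grad j y \<bullet> G - Dv grad j x \<bullet> G = (norm G)^2"
    by (simp add: G_def power2_norm_eq_inner inner_diff_left)
  have "f x + grad x \<bullet> (y - x) - (1/S) * (Dv grad j x \<bullet> G) \<le> f y - (1/S) * (Dv grad j y \<bullet> G) + S / 2 * ((1/S)^2 * (norm G)^2)"
    using gi ub e1 gh[of y] sq by simp
  moreover have "S / 2 * ((1/S)^2 * (norm G)^2) = (norm G)^2 / (2 * S)" using Spos by (simp add: power2_eq_square field_simps)
  moreover have "(1/S) * (Dv grad j y \<bullet> G) - (1/S) * (Dv grad j x \<bullet> G) = (norm G)^2 / S"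
    using e3 by (simp add: field_simps add_divide_distrib)
  moreover have "(norm G)^2 / S - (norm G)^2 / (2 * S) = (norm G)^2 / (2 * S)"
    using Spos by (simp add: field_simps)
  ultimately have "f x + grad x \<bullet> (y - x) + (norm G)^2 / (2 * S) \<le> f y"
    by linarith
  then show ?thesis unfolding G_def S_def .
qed

lemma cocoer:
  fixes f :: "real^'n::finite \<Rightarrow> real"
  assumes n2: "CARD('n) \<ge> 2"
    and grad: "\<forall>y. (f has_derivative (\<lambda>h. grad y \<bullet> h)) (at y)"
    and Lc_pos: "\<forall>i i'. i \<noteq> i' \<longrightarrow> Lc i i' > 0"
    and Lc_diag: "\<forall>i. Lc i i = 0"
    and Lc_lip: "\<forall>i i' y s t. i \<noteq> i' \<longrightarrow>
        \<bar>grad (y + s *\<^sub>R (axis i 1 - axis i' 1)) \<bullet> (axis i 1 - axis i' 1)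
         - grad (y + t *\<^sub>R (axis i 1 - axis i' 1)) \<bullet> (axis i 1 - axis i' 1)\<bar> \<le> Lc i i' * \<bar>s - t\<bar>"
    and cvx: "convex_on UNIV f"
    and s0: "sum (\<lambda>i. (y - x)$i) UNIV = 0"
  shows "norm (Dv grad j y - Dv grad j x) \<le> (\<Sum>a\<in>UNIV. Lc a j) * norm_ex j (y - x)"
proof -
  define S where "S = (\<Sum>a\<in>UNIV. Lc a j)"
  have "S = (\<Sum>a\<in>UNIV - {j}. Lc a j)"
    unfolding S_def using Lc_diag by (simp add: sum_diff1)
  moreover have "card (UNIV - {j}) \<ge> 1" using n2 by (simp add: card_Diff_singleton)
  then have "UNIV - {j} \<noteq> {}" by (metis card.empty not_one_le_zero)
  moreover have "(\<Sum>a\<in>UNIV - {j}. Lc a j) > 0" using calculation(2) Lc_pos by (intro sum_pos) auto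
  ultimately have Spos: "S > 0" by simp
  define G where "G = Dv grad j y - Dv grad j x"
  have Gj: "G $ j = 0" by (simp add: G_def)
  have c1: "f y \<ge> f x + grad x \<bullet> (y - x) + (norm G)^2 / (2 * S)"
    using cocoer1[OF n2 grad Lc_pos Lc_diag Lc_lip cvx, where x=x and y=y and j=j] unfolding G_def S_def .
  have c2: "f x \<ge> f y + grad y \<bullet> (x - y) + (norm G)^2 / (2 * S)"
    using cocoer1[OF n2 grad Lc_pos Lc_diag Lc_lip cvx, where x=y and y=x and j=j] unfolding G_def S_def
    by (simp add: norm_minus_commute)
  have "(norm G)^2 / S \<le> grad y \<bullet> (y - x) - grad x \<bullet> (y - x)"
proof -
    have "grad y \<bullet> (x - y) = - (grad y \<bullet> (y - x))" by (simp add: inner_diff_right)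
    moreover have "(norm G)^2 / (2 * S) + (norm G)^2 / (2 * S) = (norm G)^2 / S" by (simp add: field_simps)
    ultimately show ?thesis using c1 c2 by linarith
  qed
  also have "\<dots> = G \<bullet> (y - x)"
    using inner_Dv[OF s0, of grad y j] inner_Dv[OF s0, of grad x j] by (simp add: G_def inner_diff_left)
  also have "\<dots> = G \<bullet> pj j (y - x)" by (rule inner_pj[OF Gj])
  also have "\<dots> \<le> norm G * norm_ex j (y - x)"
    using norm_cauchy_schwarz[of G "pj j (y - x)"] by (simp add: norm_pj)
  finally have *: "(norm G)^2 / S \<le> norm G * norm_ex j (y - x)" .
  show ?thesis
  proof (cases "norm G = 0")
    case True
    then show ?thesis using Spos unfolding S_def by (simp add: G_def norm_ex_def sum_nonneg)
  next
    case False
    then have "norm G > 0" by simp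
    from * Spos have "(norm G)^2 \<le> S * (norm G * norm_ex j (y - x))" by (simp add: field_simps)
    then have "norm G * norm G \<le> norm G * (S * norm_ex j (y - x))" by (simp add: power2_eq_square algebra_simps)
    then show ?thesis using \<open>norm G > 0\<close> unfolding G_def S_def by simp
  qed
qed

lemma gap_props:
  fixes a b :: ereal and c A D :: real
  assumes c: "c > 0" and a: "a \<ge> 0" and b: "b \<ge> 0" and A: "A > 0"
    and D: "D = real_of_ereal (min (min a b / ereal c) (ereal A))"
  shows "0 \<le> D" "D \<le> A" "ereal (D * c) \<le> a" "ereal (D * c) \<le> b"
    "D < A \<Longrightarrow> ereal (D * c) = a \<or> ereal (D * c) = b"
proof -
  have "(0 \<le> D \<and> D \<le> A \<and> ereal (D * c) \<le> a \<and> ereal (D * c) \<le> b) \<and> (D < A \<longrightarrow> ereal (D * c) = a \<or> ereal (D * c) = b)"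
  proof (cases "min a b")
    case (real r)
    have r0: "r \<ge> 0" using a b real by (metis ereal_less_eq(5) min.bounded_iff)
    have "min a b / ereal c = ereal (r / c)" using real c by simp
    then have Dv: "D = min (r / c) A" using D by (simp add: min_def)
    have "D * c \<le> r" using c Dv by (simp add: min_def field_simps)
    moreover have "D < A \<Longrightarrow> D * c = r" using c Dv by (auto simp: min_def field_simps split: if_splits)
    moreover have "ereal r \<le> a" "ereal r \<le> b" using real by (metis min.cobounded1 min.cobounded2)+
    moreover have "0 \<le> D" using Dv r0 c A by simp
    moreover have "ereal r = a \<or> ereal r = b" using real by (metis min_def)
    ultimately show ?thesis using Dv by (auto simp: min_def) (meson ereal_less_eq(3) order.trans)+
  next
    case PInf
    then have "a = \<infinity>" "b = \<infinity>" by (metis min.bounded_iff top.extremum_unique top_ereal_def)+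
    then show ?thesis using D A c PInf by simp
  next
    case MInf
    then show ?thesis using a b by (metis ereal_infty_less_eq2(2) min_def not_MInfty_nonneg)
  qed
  then show "0 \<le> D" "D \<le> A" "ereal (D * c) \<le> a" "ereal (D * c) \<le> b"
    "D < A \<Longrightarrow> ereal (D * c) = a \<or> ereal (D * c) = b" by auto
qed


lemma ereal_gap1: "ereal a \<le> U - ereal z \<Longrightarrow> ereal (z + a) \<le> U"
  by (cases U) auto
lemma ereal_gap2: "ereal a \<le> ereal z - L \<Longrightarrow> L \<le> ereal (z - a)"
  by (cases L) auto
lemma ereal_gap1e: "ereal a = U - ereal z \<Longrightarrow> ereal (z + a) = U"
  by (cases U) auto
lemma ereal_gap2e: "ereal a = ereal z - L \<Longrightarrow> L = ereal (z - a)"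
  by (cases L) auto
lemma ereal_gap0: "ereal z \<le> U \<Longrightarrow> U - ereal z \<ge> 0"
  by (cases U) auto
lemma ereal_gap0': "L \<le> ereal z \<Longrightarrow> ereal z - L \<ge> 0"
  by (cases L) auto

lemma norm_ex_le: "norm_ex j v \<le> norm v"
proof -
  have "norm (pj j v) \<le> norm v" by (rule norm_le_componentwise_cart) (simp add: pj_def)
  then show ?thesis by (simp add: norm_pj)
qed

lemma norm_ex_nonneg: "0 \<le> norm_ex j v"
  unfolding norm_ex_def by (simp add: sum_nonneg)

locale acd =
  fixes f :: "real^'n::finite \<Rightarrow> real" and grad :: "real^'n \<Rightarrow> real^'n"
    and l u :: "'n \<Rightarrow> ereal" and b :: real and Lc :: "'n \<Rightarrow> 'n \<Rightarrow> real"
    and \<tau> \<gamma> \<delta> Al Au :: real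
    and x :: "nat \<Rightarrow> real^'n" and j :: "nat \<Rightarrow> 'n" and p :: "nat \<Rightarrow> nat \<Rightarrow> 'n"
    and A \<alpha> :: "nat \<Rightarrow> nat \<Rightarrow> real" and z :: "nat \<Rightarrow> nat \<Rightarrow> real^'n"
  assumes n2: "CARD('n) \<ge> 2"
    and lu: "\<forall>i. l i < u i" "\<forall>i. l i \<noteq> \<infinity>" "\<forall>i. u i \<noteq> -\<infinity>"
    and grad: "\<forall>y. (f has_derivative (\<lambda>h. grad y \<bullet> h)) (at y)"
    and grad_lip: "\<exists>L. \<forall>y w. norm (grad y - grad w) \<le> L * norm (y - w)"
    and Lc_pos: "\<forall>i i'. i \<noteq> i' \<longrightarrow> Lc i i' > 0"
    and Lc_diag: "\<forall>i. Lc i i = 0"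
    and Lc_lip: "\<forall>i i' y s t. i \<noteq> i' \<longrightarrow>
        \<bar>grad (y + s *\<^sub>R (axis i 1 - axis i' 1)) \<bullet> (axis i 1 - axis i' 1)
         - grad (y + t *\<^sub>R (axis i 1 - axis i' 1)) \<bullet> (axis i 1 - axis i' 1)\<bar> \<le> Lc i i' * \<bar>s - t\<bar>"
    and cvx: "convex_on UNIV f"
    and par: "0 < \<tau>" "\<tau> \<le> 1" "0 < \<gamma>" "\<gamma> < 1" "0 < \<delta>" "\<delta> < 1" "0 < Al" "Al \<le> Au"
    and x0: "x 0 \<in> feas b l u"
    and L0_compact: "compact (level0 f b l u (x 0))"
    and L0_ne: "level0 f b l u (x 0) \<noteq> {}"
    and L0_interior: "\<forall>y\<in>level0 f b l u (x 0). \<exists>i. l i < ereal (y$i) \<and> ereal (y$i) < u i"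
    and run: "AC2CD_run f grad l u \<tau> \<gamma> \<delta> Al Au x j p A z \<alpha>"
    and req: "\<forall>k' i. 1 \<le> i \<and> i \<le> CARD('n) + 1 \<longrightarrow>
        l (j k') < ereal (z k' i $ j k') \<and> ereal (z k' i $ j k') < u (j k')"
begin

definition "gk k i = grad (z k i) $ j k - grad (z k i) $ p k i"
definition "wk k i = axis (p k i) (1::real) - axis (j k) 1"
definition "Dk k i = real_of_ereal (min (abar l u (j k) (p k i) (z k i) (gk k i)) (ereal (A k i)))"

lemma stepI:
  assumes "1 \<le> i" "i \<le> CARD('n)"
  shows "Al \<le> A k i" "A k i \<le> Au"
    "\<exists>m. \<alpha> k i = \<delta>^m * Dk k i \<and> armijo f grad \<gamma> (z k i) (gk k i *\<^sub>R wk k i) (\<delta>^m * Dk k i) \<and>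
        (\<forall>m'<m. \<not> armijo f grad \<gamma> (z k i) (gk k i *\<^sub>R wk k i) (\<delta>^m' * Dk k i))"
    "z k (Suc i) = z k i + \<alpha> k i *\<^sub>R (gk k i *\<^sub>R wk k i)"
  using run assms unfolding AC2CD_run_def Let_def gk_def wk_def Dk_def by auto

lemma z1: "z k 1 = x k" and zlast: "x (Suc k) = z k (CARD('n) + 1)"
  using run unfolding AC2CD_run_def by auto

lemma pbij: "bij_betw (p k) {1..CARD('n)} UNIV"
  using run unfolding AC2CD_run_def by auto

lemma wk_comp: "wk k i $ h = (if h = p k i then 1 else 0) - (if h = j k then 1 else 0)"
  by (simp add: wk_def axis_def)

lemma grad_d: "grad (z k i) \<bullet> (gk k i *\<^sub>R wk k i) = - ((gk k i)\<^sup>2)"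
  unfolding wk_def inner_scaleR_right inner_w gk_def by (simp add: power2_eq_square algebra_simps)


lemma feasD: "y \<in> feas b l u \<Longrightarrow> l h \<le> ereal (y$h) \<and> ereal (y$h) \<le> u h"
  and feasS: "y \<in> feas b l u \<Longrightarrow> (\<Sum>i\<in>UNIV. y$i) = b"
  by (auto simp: feas_def)

lemma sum_wk: "(\<Sum>h\<in>UNIV. (c *\<^sub>R wk k i) $ h) = 0"
proof -
  have "(\<Sum>h\<in>UNIV. wk k i $ h) = (\<Sum>h\<in>UNIV. if h = p k i then 1 else 0) - (\<Sum>h\<in>UNIV. if h = j k then 1 else 0)"
    by (simp add: wk_comp sum_subtractf)
  then have "(\<Sum>h\<in>UNIV. wk k i $ h) = 0" by simp
  then show ?thesis by (simp add: sum_distrib_left[symmetric])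
qed

lemma inner_step:
  assumes zf: "z k i \<in> feas b l u" and i: "1 \<le> i" "i \<le> CARD('n)"
  shows "0 \<le> \<alpha> k i \<and> \<alpha> k i \<le> Dk k i \<and> Dk k i \<le> A k i \<and> 0 \<le> Dk k i \<and> z k (Suc i) \<in> feas b l u \<and>
         f (z k (Suc i)) \<le> f (z k i) - \<gamma> * \<alpha> k i * (gk k i)\<^sup>2"
proof -
  define g where "g = gk k i"
  define P where "P = p k i"
  define J where "J = j k"
  define zz where "zz = z k i"
  define D where "D = Dk k i"
  have Apos: "A k i > 0" using stepI(1)[OF i, of k] par by simp
  obtain m where m: "\<alpha> k i = \<delta>^m * D" "armijo f grad \<gamma> zz (g *\<^sub>R wk k i) (\<delta>^m * D)"
    using stepI(3)[OF i, of k] unfolding g_def D_def zz_def by blast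
  have zn: "z k (Suc i) = zz + \<alpha> k i *\<^sub>R (g *\<^sub>R wk k i)" using stepI(4)[OF i, of k] unfolding g_def zz_def .
  have dm: "0 \<le> \<delta>^m" "\<delta>^m \<le> 1" using par by (auto simp: power_le_one)
  have fdec: "f (z k (Suc i)) \<le> f zz - \<gamma> * \<alpha> k i * g\<^sup>2"
    using m(2) grad_d[of k i] unfolding armijo_def zn m(1) g_def zz_def by simp
  have zJ: "l J < ereal (z k (Suc i) $ J) \<and> ereal (z k (Suc i) $ J) < u J"
    using req i unfolding J_def by auto
  have comp: "z k (Suc i) $ h = zz $ h + \<alpha> k i * g * ((if h = P then 1 else 0) - (if h = J then 1 else 0))" for h
    unfolding zn by (simp add: wk_comp P_def J_def)
  have sumz: "(\<Sum>h\<in>UNIV. z k (Suc i) $ h) = b"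
    using feasS[OF zf] sum_wk[of "\<alpha> k i * g" k i] unfolding zn zz_def by (simp add: sum.distrib)
  show ?thesis
  proof (cases "g = 0")
    case True
    then have "D = 0" unfolding D_def Dk_def abar_def g_def[symmetric] using Apos by (simp add: min_def)
    then show ?thesis using m True zf fdec zn Apos unfolding zz_def D_def g_def by simp
  next
    case False
    then have PJ: "P \<noteq> J" unfolding g_def gk_def P_def J_def by auto
    have bndP: "l P \<le> ereal (zz $ P)" "ereal (zz $ P) \<le> u P" "l J \<le> ereal (zz $ J)" "ereal (zz $ J) \<le> u J"
      using feasD[OF zf] unfolding zz_def by auto
    have main: "0 \<le> D \<and> D \<le> A k i \<and> l P \<le> ereal (zz $ P + D * g) \<and> ereal (zz $ P + D * g) \<le> u P"
    proof (cases "g > 0")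
      case True
      have Dd: "D = real_of_ereal (min (min (u P - ereal (zz$P)) (ereal (zz$J) - l J) / ereal g) (ereal (A k i)))"
        unfolding D_def Dk_def abar_def using True unfolding g_def P_def J_def zz_def by simp
      note gp = gap_props[OF True ereal_gap0[OF bndP(2)] ereal_gap0'[OF bndP(3)] Apos Dd]
      have "ereal (zz $ P + D * g) \<le> u P" using ereal_gap1[OF gp(3)] .
      moreover have "l P \<le> ereal (zz $ P + D * g)" using bndP(1) gp(1) True
        by (meson ereal_less_eq(3) le_add_same_cancel1 order.trans zero_le_mult_iff less_imp_le)
      ultimately show ?thesis using gp by simp
    next
      case False
      then have gn: "g < 0" using \<open>g \<noteq> 0\<close> by simp
      have ag: "\<bar>g\<bar> > 0" using gn by simp
      have Dd: "D = real_of_ereal (min (min (ereal (zz$P) - l P) (u J - ereal (zz$J)) / ereal \<bar>g\<bar>) (ereal (A k i)))"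
        unfolding D_def Dk_def abar_def using gn unfolding g_def P_def J_def zz_def by simp
      note gp = gap_props[OF ag ereal_gap0'[OF bndP(1)] ereal_gap0[OF bndP(4)] Apos Dd]
      have e: "zz $ P + D * g = zz $ P - D * \<bar>g\<bar>" using gn by simp
      have "l P \<le> ereal (zz $ P + D * g)" unfolding e using ereal_gap2[OF gp(3)] .
      moreover have "ereal (zz $ P + D * g) \<le> u P" using bndP(2) gp(1) gn
        by (smt (verit, best) ereal_less_eq(3) mult_nonneg_nonpos order.trans)
      ultimately show ?thesis using gp by simp
    qed
    have a0: "0 \<le> \<alpha> k i" "\<alpha> k i \<le> D" using m(1) main dm by (auto simp: mult_le_cancel_right1 mult_left_le_one_le)
    have "z k (Suc i) \<in> feas b l u"
      unfolding feas_def
    proof (intro CollectI conjI allI sumz)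
      fix h
      have "l h \<le> ereal (z k (Suc i) $ h) \<and> ereal (z k (Suc i) $ h) \<le> u h"
      proof (cases "h = J")
        case True then show ?thesis using zJ by auto
      next
        case hJ: False
        show ?thesis
        proof (cases "h = P")
          case True
          have cP: "z k (Suc i) $ P = zz $ P + \<alpha> k i * g" using comp[of P] PJ by simp
          have "min (zz $ P) (zz $ P + D * g) \<le> zz $ P + \<alpha> k i * g \<and> zz $ P + \<alpha> k i * g \<le> max (zz $ P) (zz $ P + D * g)"
          proof (cases "g > 0")
            case True then show ?thesis using a0 by (simp add: mult_right_mono)
          next
            case False then have "g \<le> 0" by simp
            then have "D * g \<le> \<alpha> k i * g" "\<alpha> k i * g \<le> 0" using a0 by (auto simp: mult_right_mono_neg mult_nonneg_nonpos)
            then show ?thesis by simp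
          qed
          then have "l P \<le> ereal (zz $ P + \<alpha> k i * g) \<and> ereal (zz $ P + \<alpha> k i * g) \<le> u P"
            using main bndP(1,2)
            by (smt (verit, ccfv_SIG) ereal_less_eq(3) max_def min_def order_trans)
          then show ?thesis using True cP by simp
        next
          case False
          then have "z k (Suc i) $ h = zz $ h" using comp[of h] hJ by simp
          then show ?thesis using feasD[OF zf, of h] unfolding zz_def by simp
        qed
      qed
      then show "l h \<le> ereal (z k (Suc i) $ h)" "ereal (z k (Suc i) $ h) \<le> u h" by auto
    qed
    then show ?thesis using a0 main fdec unfolding D_def g_def zz_def by simp
  qed
qed


lemma inner_all:
  assumes "x k \<in> feas b l u"
  shows "1 \<le> i \<Longrightarrow> i \<le> CARD('n) + 1 \<Longrightarrow> z k i \<in> feas b l u \<and> f (z k i) \<le> f (x k)"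
proof (induction i)
  case 0 then show ?case by simp
next
  case (Suc i)
  show ?case
  proof (cases "i = 0")
    case True then show ?thesis using assms z1[of k] by simp
  next
    case False
    then have "z k i \<in> feas b l u \<and> f (z k i) \<le> f (x k)" using Suc by simp
    moreover have "\<gamma> * \<alpha> k i * (gk k i)\<^sup>2 \<ge> 0" using inner_step[of k i] calculation False Suc.prems par by simp
    ultimately show ?thesis using inner_step[of k i] False Suc.prems by fastforce
  qed
qed

lemma outer: "x k \<in> feas b l u \<and> f (x k) \<le> f (x 0)"
proof (induction k)
  case 0 then show ?case using x0 by simp
next
  case (Suc k)
  then show ?case using inner_all[of k "CARD('n) + 1"] zlast[of k] by simp
qed

lemma zfeas: "1 \<le> i \<Longrightarrow> i \<le> CARD('n) + 1 \<Longrightarrow> z k i \<in> feas b l u \<and> f (z k i) \<le> f (x k)"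
  using inner_all outer by blast

lemma step_alt:
  assumes i: "1 \<le> i" "i \<le> CARD('n)" and g0: "gk k i \<noteq> 0"
  shows "\<alpha> k i \<ge> Al \<or> \<alpha> k i > 2 * \<delta> * (1 - \<gamma>) / Lc (p k i) (j k) \<or>
    (gk k i > 0 \<and> ereal (z k (Suc i) $ p k i) = u (p k i)) \<or>
    (gk k i < 0 \<and> ereal (z k (Suc i) $ p k i) = l (p k i))"
proof -
  have zf: "z k i \<in> feas b l u" using zfeas[of i k] i by simp
  define g where "g = gk k i"
  define P where "P = p k i"
  define J where "J = j k"
  define zz where "zz = z k i"
  define D where "D = Dk k i"
  have Apos: "A k i > 0" using stepI(1)[OF i, of k] par by simp
  obtain m where m: "\<alpha> k i = \<delta>^m * D" "armijo f grad \<gamma> zz (g *\<^sub>R wk k i) (\<delta>^m * D)"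
     "\<forall>m'<m. \<not> armijo f grad \<gamma> zz (g *\<^sub>R wk k i) (\<delta>^m' * D)"
    using stepI(3)[OF i, of k] unfolding g_def D_def zz_def by blast
  have zn: "z k (Suc i) = zz + \<alpha> k i *\<^sub>R (g *\<^sub>R wk k i)" using stepI(4)[OF i, of k] unfolding g_def zz_def .
  have PJ: "P \<noteq> J" using g0 unfolding gk_def P_def J_def by auto
  have zJ: "l J < ereal (z k (Suc i) $ J) \<and> ereal (z k (Suc i) $ J) < u J"
    using req i unfolding J_def by auto
  have comp: "z k (Suc i) $ h = zz $ h + \<alpha> k i * g * ((if h = P then 1 else 0) - (if h = J then 1 else 0))" for h
    unfolding zn by (simp add: wk_comp P_def J_def)
  have cP: "z k (Suc i) $ P = zz $ P + \<alpha> k i * g" and cJ: "z k (Suc i) $ J = zz $ J - \<alpha> k i * g"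
    using comp[of P] comp[of J] PJ by auto
  have D0: "0 \<le> D" "D \<le> A k i" using inner_step[OF zf i] unfolding D_def by auto
  have bndP: "l P \<le> ereal (zz $ P)" "ereal (zz $ P) \<le> u P" "l J \<le> ereal (zz $ J)" "ereal (zz $ J) \<le> u J"
    using feasD[OF zf] unfolding zz_def by auto
  show ?thesis
  proof (cases m)
    case 0
    then have aD: "\<alpha> k i = D" using m by simp
    show ?thesis
    proof (cases "D < A k i")
      case False
      then have "\<alpha> k i = A k i" using aD D0 by simp
      then show ?thesis using stepI(1)[OF i, of k] by simp
    next
      case DA: True
      show ?thesis
      proof (cases "g > 0")
        case True
        have Dd: "D = real_of_ereal (min (min (u P - ereal (zz$P)) (ereal (zz$J) - l J) / ereal g) (ereal (A k i)))"
          unfolding D_def Dk_def abar_def using True unfolding g_def P_def J_def zz_def by simp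
        note gp = gap_props[OF True ereal_gap0[OF bndP(2)] ereal_gap0'[OF bndP(3)] Apos Dd]
        from gp(5)[OF DA] show ?thesis
        proof
          assume "ereal (D * g) = u P - ereal (zz $ P)"
          then have "ereal (z k (Suc i) $ P) = u P" using ereal_gap1e cP aD by (metis mult.commute)
          then show ?thesis using True unfolding g_def P_def by simp
        next
          assume "ereal (D * g) = ereal (zz $ J) - l J"
          then have "l J = ereal (z k (Suc i) $ J)" using ereal_gap2e cJ aD by metis
          then show ?thesis using zJ by simp
        qed
      next
        case False
        then have gn: "g < 0" using g0 unfolding g_def by simp
        have ag: "\<bar>g\<bar> > 0" using gn by simp
        have Dd: "D = real_of_ereal (min (min (ereal (zz$P) - l P) (u J - ereal (zz$J)) / ereal \<bar>g\<bar>) (ereal (A k i)))"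
          unfolding D_def Dk_def abar_def using gn unfolding g_def P_def J_def zz_def by simp
        note gp = gap_props[OF ag ereal_gap0'[OF bndP(1)] ereal_gap0[OF bndP(4)] Apos Dd]
        have e1: "z k (Suc i) $ P = zz $ P - D * \<bar>g\<bar>" using cP aD gn by simp
        have e2: "z k (Suc i) $ J = zz $ J + D * \<bar>g\<bar>" using cJ aD gn by simp
        from gp(5)[OF DA] show ?thesis
        proof
          assume "ereal (D * \<bar>g\<bar>) = ereal (zz $ P) - l P"
          then have "l P = ereal (z k (Suc i) $ P)" using ereal_gap2e e1 by metis
          then show ?thesis using gn unfolding g_def P_def by simp
        next
          assume "ereal (D * \<bar>g\<bar>) = u J - ereal (zz $ J)"
          then have "ereal (z k (Suc i) $ J) = u J" using ereal_gap1e e2 by (metis add.commute)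
          then show ?thesis using zJ by simp
        qed
      qed
    qed
  next
    case (Suc m')
    define t where "t = \<delta>^m' * D"
    have na: "\<not> armijo f grad \<gamma> zz (g *\<^sub>R wk k i) t" using m(3) Suc unfolding t_def by simp
    have t0: "t \<ge> 0" using D0 par unfolding t_def by simp
    have tpos: "t > 0"
    proof (rule ccontr)
      assume "\<not> t > 0" then have "t = 0" using t0 by simp
      then show False using na unfolding armijo_def by simp
    qed
    define L where "L = Lc P J"
    have Lpos: "L > 0" using Lc_pos PJ unfolding L_def by simp
    have lip: "\<bar>grad (zz + s *\<^sub>R wk k i) \<bullet> wk k i - grad (zz + r *\<^sub>R wk k i) \<bullet> wk k i\<bar> \<le> L * \<bar>s - r\<bar>" for s r
      using Lc_lip PJ unfolding wk_def L_def P_def J_def by blast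
    have ds: "f (zz + (t * g) *\<^sub>R wk k i) \<le> f zz + (t * g) * (grad zz \<bullet> wk k i) + L * (t * g)\<^sup>2 / 2"
      by (rule descent1d[OF grad lip])
    have gw: "grad zz \<bullet> wk k i = - g" unfolding wk_def inner_w g_def gk_def zz_def P_def J_def by simp
    have "f (zz + t *\<^sub>R (g *\<^sub>R wk k i)) > f zz + \<gamma> * t * (grad zz \<bullet> (g *\<^sub>R wk k i))"
      using na unfolding armijo_def by simp
    then have "f zz - \<gamma> * t * g\<^sup>2 < f zz - t * g\<^sup>2 + L * t\<^sup>2 * g\<^sup>2 / 2"
      using ds gw by (simp add: power2_eq_square algebra_simps)
    then have "(1 - \<gamma>) * (t * g\<^sup>2) < (L * t / 2) * (t * g\<^sup>2)"
      by (simp add: power2_eq_square algebra_simps)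
    moreover have "t * g\<^sup>2 > 0" using tpos g0 unfolding g_def by simp
    ultimately have "1 - \<gamma> < L * t / 2" using mult_right_less_imp_less less_imp_le by blast
    then have "2 * (1 - \<gamma>) / L < t" using Lpos by (simp add: field_simps)
    then have "\<delta> * (2 * (1 - \<gamma>) / L) < \<delta> * t" using par(5) by (intro mult_strict_left_mono) auto
    moreover have "\<alpha> k i = \<delta> * t" using m(1) Suc unfolding t_def by simp
    ultimately have "\<alpha> k i > 2 * \<delta> * (1 - \<gamma>) / L" by (simp add: algebra_simps)
    then show ?thesis unfolding L_def P_def J_def by simp
  qed
qed


lemma fcont: "continuous_on S f"
  using grad has_derivative_continuous continuous_at_imp_continuous_on by blast

lemma min_exists: "\<exists>xs\<in>level0 f b l u (x 0). \<forall>y\<in>feas b l u. f xs \<le> f y"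
proof -
  obtain xs where xs: "xs \<in> level0 f b l u (x 0)" "\<forall>y\<in>level0 f b l u (x 0). f xs \<le> f y"
    using continuous_attains_inf[OF L0_compact L0_ne fcont] by blast
  have x0L: "x 0 \<in> level0 f b l u (x 0)" using x0 unfolding level0_def by simp
  have "\<forall>y\<in>feas b l u. f xs \<le> f y"
  proof
    fix y assume y: "y \<in> feas b l u"
    show "f xs \<le> f y"
    proof (cases "f y \<le> f (x 0)")
      case True then show ?thesis using xs y unfolding level0_def by simp
    next
      case False then show ?thesis using xs(2) x0L by fastforce
    qed
  qed
  then show ?thesis using xs by blast
qed

lemma ereal_room_up: "ereal a < U \<Longrightarrow> \<exists>e>0. ereal (a + e) \<le> U"
  by (cases U) (auto intro: exI[of _ 1] exI[of _ "real_of_ereal U - a"])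
lemma ereal_room_down: "L < ereal a \<Longrightarrow> \<exists>e>0. L \<le> ereal (a - e)"
  by (cases L) (auto intro: exI[of _ 1] exI[of _ "a - real_of_ereal L"])

lemma pairwise_min:
  assumes xs: "xs \<in> feas b l u" and mn: "\<forall>y\<in>feas b l u. f xs \<le> f y"
    and ab: "a \<noteq> c" and ua: "ereal (xs$a) < u a" and lc: "l c < ereal (xs$c)"
  shows "grad xs $ a \<ge> grad xs $ c"
proof (rule ccontr)
  assume "\<not> grad xs $ a \<ge> grad xs $ c"
  then have neg: "grad xs $ a - grad xs $ c < 0" by simp
  define v where "v = axis a (1::real) - axis c 1"
  have "DERIV (\<lambda>t. f (xs + t *\<^sub>R v)) 0 :> (grad xs \<bullet> v)"
    using line_deriv[OF grad, of xs v 0] by simp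
  moreover have "grad xs \<bullet> v < 0" unfolding v_def inner_w using neg .
  ultimately obtain d where d: "d > 0" "\<forall>h>0. h < d \<longrightarrow> f (xs + 0 *\<^sub>R v) > f (xs + (0 + h) *\<^sub>R v)"
    using DERIV_neg_dec_right by blast
  obtain e1 where e1: "e1 > 0" "ereal (xs$a + e1) \<le> u a" using ereal_room_up[OF ua] by blast
  obtain e2 where e2: "e2 > 0" "l c \<le> ereal (xs$c - e2)" using ereal_room_down[OF lc] by blast
  define h where "h = min (d / 2) (min e1 e2)"
  have h: "h > 0" "h < d" "h \<le> e1" "h \<le> e2" using d e1 e2 unfolding h_def by auto
  have lt: "f (xs + h *\<^sub>R v) < f xs" using d(2) h by simp
  have comp: "(xs + h *\<^sub>R v) $ i = xs $ i + h * ((if i = a then 1 else 0) - (if i = c then 1 else 0))" for i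
    by (simp add: v_def axis_def)
  have "xs + h *\<^sub>R v \<in> feas b l u"
    unfolding feas_def
  proof (intro CollectI conjI allI)
    have sv: "(\<Sum>i\<in>UNIV. v $ i) = 0"
      by (simp add: v_def axis_def sum_subtractf sum.delta')
    have "(\<Sum>i\<in>UNIV. (xs + h *\<^sub>R v) $ i) = (\<Sum>i\<in>UNIV. xs $ i) + h * (\<Sum>i\<in>UNIV. v $ i)"
      by (simp add: sum.distrib sum_distrib_left)
    then show "(\<Sum>i\<in>UNIV. (xs + h *\<^sub>R v) $ i) = b" using feasS[OF xs] sv by simp
  next
    fix i
    have "l i \<le> ereal ((xs + h *\<^sub>R v) $ i) \<and> ereal ((xs + h *\<^sub>R v) $ i) \<le> u i"
    proof (cases "i = a")
      case True
      then have "(xs + h *\<^sub>R v) $ i = xs $ a + h" using ab by (simp add: v_def axis_def)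
      moreover have "ereal (xs $ a + h) \<le> u a" using e1 h by (meson add_left_mono ereal_less_eq(3) order.trans)
      moreover have "l a \<le> ereal (xs $ a + h)" using feasD[OF xs, of a] h
        by (meson ereal_less_eq(3) le_add_same_cancel1 less_imp_le order.trans)
      ultimately show ?thesis using True by metis
    next
      case ia: False
      show ?thesis
      proof (cases "i = c")
        case True
        then have "(xs + h *\<^sub>R v) $ i = xs $ c - h" using ab by (simp add: v_def axis_def)
        moreover have "l c \<le> ereal (xs $ c - h)" using e2 h by (meson diff_left_mono ereal_less_eq(3) order.trans)
        moreover have "ereal (xs $ c - h) \<le> u c" using feasD[OF xs, of c] h
          by (smt (verit) ereal_less_eq(3) order.trans)
        ultimately show ?thesis using True by metis
      next
        case False
        then show ?thesis using ia feasD[OF xs, of i] by (simp add: v_def axis_def)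
      qed
    qed
    then show "l i \<le> ereal ((xs + h *\<^sub>R v) $ i)" "ereal ((xs + h *\<^sub>R v) $ i) \<le> u i" by auto
  qed
  then show False using mn lt by fastforce
qed

lemma min_stationary:
  assumes xs: "xs \<in> feas b l u" and mn: "\<forall>y\<in>feas b l u. f xs \<le> f y"
    and int: "l i0 < ereal (xs$i0)" "ereal (xs$i0) < u i0"
  shows "stationary grad b l u xs"
  unfolding stationary_def
proof (intro conjI xs exI[of _ "grad xs $ i0"] allI)
  fix c
  show "ereal (xs $ c) = l c \<longrightarrow> grad xs $ i0 \<le> grad xs $ c"
  proof
    assume e: "ereal (xs $ c) = l c"
    then have "c \<noteq> i0" using int by auto
    moreover have "ereal (xs $ c) < u c" using e lu by simp
    ultimately show "grad xs $ i0 \<le> grad xs $ c" using pairwise_min[OF xs mn _ _ int(1)] by simp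
  qed
  show "ereal (xs $ c) = u c \<longrightarrow> grad xs $ c \<le> grad xs $ i0"
  proof
    assume e: "ereal (xs $ c) = u c"
    then have "c \<noteq> i0" using int by auto
    moreover have "l c < ereal (xs $ c)" using e lu by simp
    ultimately show "grad xs $ c \<le> grad xs $ i0" using pairwise_min[OF xs mn _ int(2)] by simp
  qed
  show "l c < ereal (xs $ c) \<and> ereal (xs $ c) < u c \<longrightarrow> grad xs $ c = grad xs $ i0"
  proof
    assume e: "l c < ereal (xs $ c) \<and> ereal (xs $ c) < u c"
    show "grad xs $ c = grad xs $ i0"
    proof (cases "c = i0")
      case False
      then show ?thesis using pairwise_min[OF xs mn _ int(2) e[THEN conjunct1]]
        pairwise_min[OF xs mn _ e[THEN conjunct2] int(1)] by force
    qed simp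
  qed
qed

lemma stat_min:
  assumes st: "stationary grad b l u xs" and y: "y \<in> feas b l u"
  shows "f xs \<le> f y"
proof -
  from st obtain lam where xs: "xs \<in> feas b l u" and lam: "\<forall>i.
        (ereal (xs$i) = l i \<longrightarrow> grad xs $ i \<ge> lam) \<and>
        (l i < ereal (xs$i) \<and> ereal (xs$i) < u i \<longrightarrow> grad xs $ i = lam) \<and>
        (ereal (xs$i) = u i \<longrightarrow> grad xs $ i \<le> lam)"
    unfolding stationary_def by blast
  have s0: "(\<Sum>i\<in>UNIV. (y - xs) $ i) = 0" using feasS[OF xs] feasS[OF y] by (simp add: sum_subtractf)
  have "grad xs \<bullet> (y - xs) = (\<Sum>i\<in>UNIV. grad xs $ i * (y - xs) $ i)" by (simp add: inner_vec_def)
  also have "\<dots> = (\<Sum>i\<in>UNIV. (grad xs $ i - lam) * (y - xs) $ i) + lam * (\<Sum>i\<in>UNIV. (y - xs) $ i)"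
    by (simp add: algebra_simps sum.distrib sum_distrib_left sum_subtractf)
  also have "\<dots> = (\<Sum>i\<in>UNIV. (grad xs $ i - lam) * (y - xs) $ i)" using s0 by simp
  also have "\<dots> \<ge> 0"
  proof (rule sum_nonneg)
    fix i :: 'n
    have bx: "l i \<le> ereal (xs$i)" "ereal (xs$i) \<le> u i" using feasD[OF xs] by auto
    have byy: "l i \<le> ereal (y$i)" "ereal (y$i) \<le> u i" using feasD[OF y] by auto
    show "(grad xs $ i - lam) * (y - xs) $ i \<ge> 0"
    proof (cases "ereal (xs$i) = l i")
      case True
      then have "xs $ i \<le> y $ i" using byy by (metis ereal_less_eq(3))
      then show ?thesis using lam True by simp
    next
      case F1: False
      show ?thesis
      proof (cases "ereal (xs$i) = u i")
        case True
        then have "y $ i \<le> xs $ i" using byy by (metis ereal_less_eq(3))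
        then show ?thesis using lam True by (simp add: mult_nonpos_nonpos)
      next
        case False
        then have "grad xs $ i = lam" using lam F1 bx by (simp add: order.strict_iff_order)
        then show ?thesis by simp
      qed
    qed
  qed
  finally show ?thesis using grad_ineq[OF grad cvx, where w=y and x=xs] by simp
qed


lemma Xstar_sub: "xs \<in> Xstar grad b l u \<Longrightarrow> xs \<in> level0 f b l u (x 0)"
  using stat_min[of xs "x 0"] x0 unfolding Xstar_def level0_def stationary_def by auto

lemma xstar_exists: "\<exists>xs. xs \<in> Xstar grad b l u \<and> (\<forall>y\<in>feas b l u. f xs \<le> f y)"
proof -
  obtain xs where xs: "xs \<in> level0 f b l u (x 0)" "\<forall>y\<in>feas b l u. f xs \<le> f y" using min_exists by blast
  obtain i0 where "l i0 < ereal (xs$i0)" "ereal (xs$i0) < u i0" using L0_interior xs by blast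
  then have "stationary grad b l u xs" using min_stationary[of xs i0] xs unfolding level0_def by auto
  then show ?thesis using xs unfolding Xstar_def by auto
qed

lemma L0_bound: obtains B where "\<forall>y\<in>level0 f b l u (x 0). norm y \<le> B"
  using compact_imp_bounded[OF L0_compact] unfolding bounded_iff by blast

lemma R0_bdd: "bdd_above {norm_ex jj (y - xs) | jj y xs. y \<in> level0 f b l u (x 0) \<and> xs \<in> Xstar grad b l u}"
proof -
  obtain B where B: "\<forall>y\<in>level0 f b l u (x 0). norm y \<le> B" using L0_bound by blast
  show ?thesis
  proof (rule bdd_aboveI)
    fix r assume "r \<in> {norm_ex jj (y - xs) | jj y xs. y \<in> level0 f b l u (x 0) \<and> xs \<in> Xstar grad b l u}"
    then obtain jj y xs where r: "r = norm_ex jj (y - xs)" "y \<in> level0 f b l u (x 0)" "xs \<in> Xstar grad b l u" by blast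
    have "r \<le> norm (y - xs)" using r norm_ex_le by simp
    also have "\<dots> \<le> norm y + norm xs" by (rule norm_triangle_ineq4)
    also have "\<dots> \<le> B + B" using B r Xstar_sub by (meson add_mono)
    finally show "r \<le> 2 * B" by simp
  qed
qed

lemma R0_upper: "y \<in> level0 f b l u (x 0) \<Longrightarrow> xs \<in> Xstar grad b l u \<Longrightarrow> norm_ex jj (y - xs) \<le> R0 f grad b l u (x 0)"
  unfolding R0_def by (rule cSup_upper[OF _ R0_bdd]) blast

lemma R0_nonneg: "0 \<le> R0 f grad b l u (x 0)"
proof -
  obtain xs where xs: "xs \<in> Xstar grad b l u" using xstar_exists by blast
  have "0 \<le> norm_ex (undefined::'n) (xs - xs)" by (rule norm_ex_nonneg)
  also have "\<dots> \<le> R0 f grad b l u (x 0)" using R0_upper[OF Xstar_sub[OF xs] xs] .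
  finally show ?thesis .
qed

lemma G_nonneg: "0 \<le> Gstar grad b l u"
proof -
  obtain xs where xs: "xs \<in> Xstar grad b l u" using xstar_exists by blast
  obtain B where B: "\<forall>y\<in>level0 f b l u (x 0). norm y \<le> B" using L0_bound by blast
  obtain L where L: "\<forall>y w. norm (grad y - grad w) \<le> L * norm (y - w)" using grad_lip by blast
  have gb: "norm (grad y) \<le> norm (grad (x 0)) + \<bar>L\<bar> * (B + norm (x 0))" if y: "y \<in> level0 f b l u (x 0)" for y
proof -
    have "norm (grad y) \<le> norm (grad (x 0)) + norm (grad y - grad (x 0))" by (rule norm_triangle_sub)
    also have "norm (grad y - grad (x 0)) \<le> \<bar>L\<bar> * norm (y - x 0)"
      using L[rule_format, of y "x 0"] by (meson abs_ge_self mult_right_mono norm_ge_zero order.trans)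
    also have "norm (y - x 0) \<le> B + norm (x 0)" using B y norm_triangle_ineq4[of y "x 0"] by fastforce
    finally show ?thesis by (simp add: mult_left_mono)
  qed
  have bdd: "bdd_above {grad xs $ jj - grad xs $ ii | ii jj xs. xs \<in> Xstar grad b l u}"
  proof (rule bdd_aboveI)
    fix r assume "r \<in> {grad xs $ jj - grad xs $ ii | ii jj xs. xs \<in> Xstar grad b l u}"
    then obtain ii jj y where r: "r = grad y $ jj - grad y $ ii" "y \<in> Xstar grad b l u" by blast
    have "r \<le> norm (grad y) + norm (grad y)" using r component_le_norm_cart[of "grad y" jj] component_le_norm_cart[of "grad y" ii]
      by linarith
    also have "\<dots> \<le> 2 * (norm (grad (x 0)) + \<bar>L\<bar> * (B + norm (x 0)))" using gb[OF Xstar_sub[OF r(2)]] by simp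
    finally show "r \<le> 2 * (norm (grad (x 0)) + \<bar>L\<bar> * (B + norm (x 0)))" .
  qed
  have "(0::real) = grad xs $ (undefined::'n) - grad xs $ undefined" by simp
  also have "\<dots> \<le> Gstar grad b l u" unfolding Gstar_def by (rule cSup_upper[OF _ bdd]) (use xs in blast)
  finally show ?thesis .
qed


end

context acd begin

lemma swap_tri:
  fixes F :: "nat \<Rightarrow> nat \<Rightarrow> real"
  shows "(\<Sum>i\<in>{1..N}. \<Sum>m\<in>{i..N}. F i m) = (\<Sum>m\<in>{1..N}. \<Sum>i\<in>{1..m}. F i m)"
proof -
  have "(\<Sum>i\<in>{1..N}. \<Sum>m\<in>{i..N}. F i m) = (\<Sum>i\<in>{1..N}. \<Sum>m\<in>{m. m \<in> {1..N} \<and> i \<le> m}. F i m)"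
    by (intro sum.cong) auto
  also have "\<dots> = (\<Sum>m\<in>{1..N}. \<Sum>i\<in>{i. i \<in> {1..N} \<and> i \<le> m}. F i m)"
    by (rule sum.swap_restrict) auto
  also have "\<dots> = (\<Sum>m\<in>{1..N}. \<Sum>i\<in>{1..m}. F i m)"
    by (intro sum.cong) auto
  finally show ?thesis .
qed

lemma decomp:
  assumes s0: "(\<Sum>h\<in>UNIV. y $ h) = 0"
  shows "grad (x (Suc k)) \<bullet> y =
    (\<Sum>i\<in>{1..CARD('n)}. - gk k i * pj (j k) y $ p k i) +
    (\<Sum>m\<in>{1..CARD('n)}. \<Sum>i\<in>{1..m}. (Dv grad (j k) (z k (Suc m)) - Dv grad (j k) (z k m)) $ p k i * pj (j k) y $ p k i)"
proof -
  define N where "N = CARD('n)"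
  define J where "J = j k"
  define Y where "Y = pj J y"
  define Dz where "Dz i = Dv grad J (z k i)" for i
  have xp: "x (Suc k) = z k (Suc N)" using zlast[of k] unfolding N_def by simp
  have "grad (x (Suc k)) \<bullet> y = Dv grad J (x (Suc k)) \<bullet> y" by (rule inner_Dv[OF s0])
  also have "\<dots> = Dv grad J (x (Suc k)) \<bullet> Y" unfolding Y_def by (rule inner_pj) simp
  also have "\<dots> = (\<Sum>h\<in>UNIV. Dz (Suc N) $ h * Y $ h)" unfolding inner_vec_def Dz_def xp by simp
  also have "\<dots> = (\<Sum>i\<in>{1..N}. Dz (Suc N) $ p k i * Y $ p k i)"
    using sum.reindex_bij_betw[OF pbij[of k], of "\<lambda>h. Dz (Suc N) $ h * Y $ h"] unfolding N_def by simp
  also have "\<dots> = (\<Sum>i\<in>{1..N}. (- gk k i) * Y $ p k i + (\<Sum>m\<in>{i..N}. (Dz (Suc m) $ p k i - Dz m $ p k i) * Y $ p k i))"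
  proof (rule sum.cong)
    fix i assume i: "i \<in> {1..N}"
    have "(\<Sum>m\<in>{i..N}. Dz (Suc m) $ p k i - Dz m $ p k i) = Dz (Suc N) $ p k i - Dz i $ p k i"
      using sum_Suc_diff[of i N "\<lambda>m. Dz m $ p k i"] i by simp
    moreover have "Dz i $ p k i = - gk k i" unfolding Dz_def Dv_def gk_def J_def by simp
    ultimately have e: "(\<Sum>m\<in>{i..N}. (Dz (Suc m) $ p k i - Dz m $ p k i) * Y $ p k i) = (Dz (Suc N) $ p k i + gk k i) * Y $ p k i"
      by (simp add: sum_distrib_right[symmetric])
    show "Dz (Suc N) $ p k i * Y $ p k i = (- gk k i) * Y $ p k i + (\<Sum>m\<in>{i..N}. (Dz (Suc m) $ p k i - Dz m $ p k i) * Y $ p k i)"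
      unfolding e by (simp add: algebra_simps)
  qed simp
  also have "\<dots> = (\<Sum>i\<in>{1..N}. (- gk k i) * Y $ p k i) + (\<Sum>i\<in>{1..N}. \<Sum>m\<in>{i..N}. (Dz (Suc m) $ p k i - Dz m $ p k i) * Y $ p k i)"
    by (rule sum.distrib)
  also have "(\<Sum>i\<in>{1..N}. \<Sum>m\<in>{i..N}. (Dz (Suc m) $ p k i - Dz m $ p k i) * Y $ p k i)
     = (\<Sum>m\<in>{1..N}. \<Sum>i\<in>{1..m}. (Dz (Suc m) $ p k i - Dz m $ p k i) * Y $ p k i)"
    by (rule swap_tri)
  finally show ?thesis unfolding N_def J_def Y_def Dz_def by simp
qed

lemma coord_stable:
  assumes i: "1 \<le> i" "i \<le> CARD('n)" and g0: "gk k i \<noteq> 0"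
  shows "Suc i \<le> m \<Longrightarrow> m \<le> CARD('n) + 1 \<Longrightarrow> z k m $ p k i = z k (Suc i) $ p k i"
proof (induction m)
  case 0 then show ?case by simp
next
  case (Suc m)
  show ?case
  proof (cases "Suc i = Suc m")
    case True then show ?thesis by simp
  next
    case False
    then have m: "Suc i \<le> m" "m \<le> CARD('n)" "1 \<le> m" using Suc.prems by auto
    have "p k m \<noteq> p k i"
    proof
      assume "p k m = p k i"
      moreover have "inj_on (p k) {1..CARD('n)}" using pbij[of k] by (rule bij_betw_imp_inj_on)
      ultimately have "m = i" using m i by (meson atLeastAtMost_iff inj_onD)
      then show False using m by simp
    qed
    moreover have "p k i \<noteq> j k" using g0 unfolding gk_def by auto
    ultimately have "wk k m $ p k i = 0" by (simp add: wk_comp)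
    then have "z k (Suc m) $ p k i = z k m $ p k i" using stepI(4)[OF m(3) m(2), of k] by simp
    moreover have "z k m $ p k i = z k (Suc i) $ p k i" using Suc.IH m(1) m(2) by simp
    ultimately show ?thesis by simp
  qed
qed


lemma alpha_nonneg:
  assumes i: "1 \<le> i" "i \<le> CARD('n)"
  shows "0 \<le> \<alpha> k i \<and> \<alpha> k i \<le> Au"
proof -
  have zf: "z k i \<in> feas b l u" using zfeas[of i k] i by simp
  have "0 \<le> \<alpha> k i \<and> \<alpha> k i \<le> Dk k i \<and> Dk k i \<le> A k i" using inner_step[OF zf i] by blast
  moreover have "A k i \<le> Au" by (rule stepI(2)[OF i])
  ultimately show ?thesis by linarith
qed

lemma norm_sq_sum: "(norm (v::real^'n))\<^sup>2 = (\<Sum>h\<in>UNIV. (v $ h)\<^sup>2)"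
  by (simp only: power2_norm_eq_inner inner_vec_def) (simp add: power2_eq_square)

lemma norm_ex_step:
  assumes i: "1 \<le> i" "i \<le> CARD('n)"
  shows "norm_ex (j k) (z k (Suc i) - z k i) \<le> \<alpha> k i * \<bar>gk k i\<bar>"
proof -
  have zd: "z k (Suc i) - z k i = (\<alpha> k i * gk k i) *\<^sub>R wk k i" using stepI(4)[OF i, of k] by simp
  have "(norm_ex (j k) (wk k i))\<^sup>2 = (\<Sum>h\<in>UNIV - {j k}. (wk k i $ h)\<^sup>2)"
    unfolding norm_ex_def by (simp add: sum_nonneg)
  also have "\<dots> \<le> (\<Sum>h\<in>UNIV - {j k}. if h = p k i then 1 else 0)"
    by (rule sum_mono) (simp add: wk_comp)
  also have "\<dots> \<le> 1" by (simp add: sum.delta')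
  finally have "(norm_ex (j k) (wk k i))\<^sup>2 \<le> 1\<^sup>2" by simp
  then have w1: "norm_ex (j k) (wk k i) \<le> 1" by (rule power2_le_imp_le) simp
  have "norm_ex (j k) (c *\<^sub>R v) = \<bar>c\<bar> * norm_ex (j k) v" for c v
proof -
    have "(\<Sum>h\<in>UNIV - {j k}. ((c *\<^sub>R v) $ h)\<^sup>2) = c\<^sup>2 * (\<Sum>h\<in>UNIV - {j k}. (v $ h)\<^sup>2)"
      by (simp add: sum_distrib_left power_mult_distrib)
    then show ?thesis unfolding norm_ex_def by (simp add: real_sqrt_mult)
  qed
  then have "norm_ex (j k) (z k (Suc i) - z k i) = \<bar>\<alpha> k i * gk k i\<bar> * norm_ex (j k) (wk k i)" unfolding zd by simp
  also have "\<dots> \<le> \<bar>\<alpha> k i * gk k i\<bar>" using w1 by (simp add: mult_left_le)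
  also have "\<dots> = \<alpha> k i * \<bar>gk k i\<bar>" using alpha_nonneg[OF i, of k] by (simp add: abs_mult)
  finally show ?thesis .
qed

lemma sum_z_step:
  assumes i: "1 \<le> i" "i \<le> CARD('n)"
  shows "(\<Sum>h\<in>UNIV. (z k (Suc i) - z k i) $ h) = 0"
proof -
  have "z k (Suc i) - z k i = (\<alpha> k i * gk k i) *\<^sub>R wk k i" using stepI(4)[OF i, of k] by simp
  then show ?thesis using sum_wk[of "\<alpha> k i * gk k i" k i] by simp
qed

lemma second_bound:
  assumes m: "1 \<le> m" "m \<le> CARD('n)" and R: "norm_ex (j k) y \<le> R"
  shows "(\<Sum>i\<in>{1..m}. (Dv grad (j k) (z k (Suc m)) - Dv grad (j k) (z k m)) $ p k i * pj (j k) y $ p k i)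
     \<le> (\<Sum>a\<in>UNIV. Lc a (j k)) * (\<alpha> k m * \<bar>gk k m\<bar>) * R"
proof -
  define G where "G = Dv grad (j k) (z k (Suc m)) - Dv grad (j k) (z k m)"
  define Y where "Y = pj (j k) y"
  define X where "X = (\<Sum>i\<in>{1..m}. G $ p k i * Y $ p k i)"
  have sub: "{1..m} \<subseteq> {1..CARD('n)}" using m by auto
  have sq: "(\<Sum>i\<in>{1..m}. (v $ p k i)\<^sup>2) \<le> (norm v)\<^sup>2" for v :: "real^'n"
proof -
    have "(\<Sum>i\<in>{1..m}. (v $ p k i)\<^sup>2) \<le> (\<Sum>i\<in>{1..CARD('n)}. (v $ p k i)\<^sup>2)"
      by (rule sum_mono2[OF _ sub]) auto
    also have "\<dots> = (\<Sum>h\<in>UNIV. (v $ h)\<^sup>2)"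
      by (rule sum.reindex_bij_betw[OF pbij[of k]])
    finally show ?thesis by (simp add: norm_sq_sum)
  qed
  have "X\<^sup>2 \<le> (\<Sum>i\<in>{1..m}. (G $ p k i)\<^sup>2) * (\<Sum>i\<in>{1..m}. (Y $ p k i)\<^sup>2)"
    unfolding X_def by (rule Cauchy_Schwarz_ineq_sum)
  also have "\<dots> \<le> (norm G)\<^sup>2 * (norm Y)\<^sup>2"
    by (intro mult_mono sq) (auto simp: sum_nonneg)
  also have "\<dots> = (norm G * norm Y)\<^sup>2" by (simp add: power_mult_distrib)
  finally have "X \<le> norm G * norm Y" by (rule power2_le_imp_le) simp
  have nG: "norm G \<le> (\<Sum>a\<in>UNIV. Lc a (j k)) * norm_ex (j k) (z k (Suc m) - z k m)"
    unfolding G_def by (rule cocoer[OF n2 grad Lc_pos Lc_diag Lc_lip cvx sum_z_step[OF m]])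
  have nY: "norm Y = norm_ex (j k) y" unfolding Y_def by (rule norm_pj)
  have "0 \<le> Lc a (j k)" for a using Lc_pos Lc_diag by (cases "a = j k") (auto intro: less_imp_le)
  then have S0: "0 \<le> (\<Sum>a\<in>UNIV. Lc a (j k))" by (intro sum_nonneg)
  have a0: "0 \<le> \<alpha> k m * \<bar>gk k m\<bar>" using alpha_nonneg[OF m, of k] by simp
  have "norm G * norm Y \<le> ((\<Sum>a\<in>UNIV. Lc a (j k)) * norm_ex (j k) (z k (Suc m) - z k m)) * norm_ex (j k) y"
    unfolding nY by (rule mult_right_mono[OF nG norm_ex_nonneg])
  also have "\<dots> \<le> ((\<Sum>a\<in>UNIV. Lc a (j k)) * (\<alpha> k m * \<bar>gk k m\<bar>)) * R"
    using norm_ex_step[OF m, of k] R S0 a0 norm_ex_nonneg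
    by (intro mult_mono mult_left_mono) (auto intro: mult_nonneg_nonneg)
  finally have "X \<le> (\<Sum>a\<in>UNIV. Lc a (j k)) * (\<alpha> k m * \<bar>gk k m\<bar>) * R" using \<open>X \<le> norm G * norm Y\<close> by linarith
  then show ?thesis unfolding X_def G_def Y_def by simp
qed


lemma Lmax_ge: "Lc a c \<le> Lmax Lc"
proof -
  have eq: "{Lc i j |i j. True} = (\<lambda>(i, j). Lc i j) ` UNIV" by auto
  have "finite {Lc i j |i j. True}" unfolding eq by simp
  then show ?thesis unfolding Lmax_def by (rule Max_ge) blast
qed

lemma first_bound:
  assumes i: "1 \<le> i" "i \<le> CARD('n)" and xs: "xs \<in> Xstar grad b l u"
  shows "- gk k i * pj (j k) (x (Suc k) - xs) $ p k i
     \<le> max (1 / Al) (Lmax Lc / (2 * \<delta> * (1 - \<gamma>))) * (\<alpha> k i * \<bar>gk k i\<bar>) * R0 f grad b l u (x 0)"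
proof -
  define M where "M = max (1 / Al) (Lmax Lc / (2 * \<delta> * (1 - \<gamma>)))"
  define R where "R = R0 f grad b l u (x 0)"
  define g where "g = gk k i"
  define P where "P = p k i"
  define J where "J = j k"
  define Y where "Y = pj J (x (Suc k) - xs)"
  have R0: "0 \<le> R" unfolding R_def by (rule R0_nonneg)
  have M0: "M \<ge> 1 / Al" "1 / Al > 0" unfolding M_def using par by auto
  have a0: "0 \<le> \<alpha> k i" using alpha_nonneg[OF i] by simp
  have xpL: "x (Suc k) \<in> level0 f b l u (x 0)" using outer[of "Suc k"] unfolding level0_def by simp
  have YR: "\<bar>Y $ P\<bar> \<le> R"
    using component_le_norm_cart[of Y P] norm_pj[of J "x (Suc k) - xs"] R0_upper[OF xpL xs, of J]
    unfolding Y_def R_def by simp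
  have M00: "0 \<le> M" using M0 by linarith
  then have RHS0: "0 \<le> M * (\<alpha> k i * \<bar>g\<bar>) * R" using a0 R0 by simp
  have big: "- g * Y $ P \<le> M * (\<alpha> k i * \<bar>g\<bar>) * R" if Ma: "1 \<le> M * \<alpha> k i"
proof -
    have "- g * Y $ P \<le> \<bar>g\<bar> * \<bar>Y $ P\<bar>" by (metis abs_ge_minus_self abs_mult mult_minus_left)
    also have "\<dots> \<le> \<bar>g\<bar> * R" using YR by (simp add: mult_left_mono)
    also have "\<dots> \<le> (M * \<alpha> k i) * (\<bar>g\<bar> * R)" using mult_right_mono[OF Ma, of "\<bar>g\<bar> * R"] R0 by simp
    finally show ?thesis by (simp add: algebra_simps)
  qed
  have "- g * Y $ P \<le> M * (\<alpha> k i * \<bar>g\<bar>) * R"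
  proof (cases "g = 0")
    case True then show ?thesis using RHS0 by simp
  next
    case False
    then have PJ: "P \<noteq> J" unfolding g_def gk_def P_def J_def by auto
    have xpP: "x (Suc k) $ P = z k (Suc i) $ P"
      using coord_stable[OF i False[unfolded g_def], of "CARD('n) + 1"] zlast[of k] i unfolding P_def by simp
    have YP: "Y $ P = x (Suc k) $ P - xs $ P" unfolding Y_def pj_def using PJ by simp
    have xsf: "xs \<in> feas b l u" using xs unfolding Xstar_def stationary_def by simp
    from step_alt[OF i False[unfolded g_def]]
    consider "\<alpha> k i \<ge> Al" | "\<alpha> k i > 2 * \<delta> * (1 - \<gamma>) / Lc P J"
      | "g > 0 \<and> ereal (z k (Suc i) $ P) = u P" | "g < 0 \<and> ereal (z k (Suc i) $ P) = l P"
      unfolding g_def P_def J_def by blast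
    then show ?thesis
    proof cases
      case 1
      have "1 = (1 / Al) * Al" using par by simp
      also have "\<dots> \<le> M * \<alpha> k i" using M0 1 par M00 by (intro mult_mono) auto
      finally show ?thesis by (rule big)
    next
      case 2
      have Lp: "Lc P J > 0" using Lc_pos PJ by simp
      have Lm: "Lc P J \<le> Lmax Lc" by (rule Lmax_ge)
      have c0: "2 * \<delta> * (1 - \<gamma>) > 0" using par by simp
      have "2 * \<delta> * (1 - \<gamma>) / Lmax Lc \<le> 2 * \<delta> * (1 - \<gamma>) / Lc P J"
        using Lp Lm c0 by (intro divide_left_mono) auto
      then have al: "2 * \<delta> * (1 - \<gamma>) / Lmax Lc \<le> \<alpha> k i" using 2 by simp
      have "1 = (Lmax Lc / (2 * \<delta> * (1 - \<gamma>))) * (2 * \<delta> * (1 - \<gamma>) / Lmax Lc)"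
        using Lp Lm c0 par by (simp add: field_simps)
      also have "\<dots> \<le> M * \<alpha> k i" using al Lp Lm c0 M00
        by (intro mult_mono) (auto simp: M_def)
      finally show ?thesis by (rule big)
    next
      case 3
      have "ereal (xs $ P) \<le> ereal (x (Suc k) $ P)" using feasD[OF xsf, of P] 3 xpP by simp
      then have "Y $ P \<ge> 0" using YP by simp
      then have "- g * Y $ P \<le> 0" using 3 by simp
      then show ?thesis using RHS0 by linarith
    next
      case 4
      have "ereal (x (Suc k) $ P) \<le> ereal (xs $ P)" using feasD[OF xsf, of P] 4 xpP by simp
      then have "Y $ P \<le> 0" using YP by simp
      then have "- g * Y $ P \<le> 0" using 4 by (simp add: mult_nonpos_nonpos)
      then show ?thesis using RHS0 by linarith
    qed
  qed
  then show ?thesis unfolding M_def R_def g_def P_def J_def Y_def .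
qed


lemma decrease: "f (x k) - f (x (Suc k)) \<ge> \<gamma> * (\<Sum>i\<in>{1..CARD('n)}. \<alpha> k i * (gk k i)\<^sup>2)"
proof -
  define N where "N = CARD('n)"
  have "(\<Sum>i\<in>{1..N}. f (z k (Suc i)) - f (z k i)) = f (z k (Suc N)) - f (z k 1)"
    by (rule sum_Suc_diff) simp
  then have tel: "f (x k) - f (x (Suc k)) = (\<Sum>i\<in>{1..N}. f (z k i) - f (z k (Suc i)))"
    using z1[of k] zlast[of k] unfolding N_def by (simp add: sum_subtractf)
  have "\<gamma> * (\<Sum>i\<in>{1..N}. \<alpha> k i * (gk k i)\<^sup>2) = (\<Sum>i\<in>{1..N}. \<gamma> * \<alpha> k i * (gk k i)\<^sup>2)"
    by (simp add: sum_distrib_left mult.assoc)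
  also have "\<dots> \<le> (\<Sum>i\<in>{1..N}. f (z k i) - f (z k (Suc i)))"
  proof (rule sum_mono)
    fix i assume i: "i \<in> {1..N}"
    then have zf: "z k i \<in> feas b l u" using zfeas[of i k] unfolding N_def by simp
    show "\<gamma> * \<alpha> k i * (gk k i)\<^sup>2 \<le> f (z k i) - f (z k (Suc i))"
      using inner_step[OF zf] i unfolding N_def by force
  qed
  finally show ?thesis using tel unfolding N_def by simp
qed

lemma Tsq: "(\<Sum>i\<in>{1..CARD('n)}. \<alpha> k i * \<bar>gk k i\<bar>)\<^sup>2
   \<le> (real CARD('n) - 1) * Au * (\<Sum>i\<in>{1..CARD('n)}. \<alpha> k i * (gk k i)\<^sup>2)"
proof -
  define N where "N = CARD('n)"
  define I where "I = {i \<in> {1..N}. p k i \<noteq> j k}"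
  have finI: "finite I" unfolding I_def by simp
  have IN: "I \<subseteq> {1..N}" unfolding I_def by auto
  have an: "i \<in> {1..N} \<Longrightarrow> 0 \<le> \<alpha> k i \<and> \<alpha> k i \<le> Au" for i using alpha_nonneg[of i k] unfolding N_def by simp
  have g0: "p k i = j k \<Longrightarrow> gk k i = 0" for i unfolding gk_def by simp
  have T: "(\<Sum>i\<in>{1..N}. \<alpha> k i * \<bar>gk k i\<bar>) = (\<Sum>i\<in>I. \<alpha> k i * \<bar>gk k i\<bar>)"
    unfolding I_def using g0 by (intro sum.mono_neutral_right) auto
  have inj: "inj_on (p k) I" using bij_betw_imp_inj_on[OF pbij[of k]] IN unfolding N_def by (rule inj_on_subset)
  have img: "p k ` I = UNIV - {j k}"
proof -
    have "p k ` {1..N} = UNIV" using pbij[of k] unfolding N_def bij_betw_def by simp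
    show ?thesis
    proof
      show "p k ` I \<subseteq> UNIV - {j k}" unfolding I_def by auto
      show "UNIV - {j k} \<subseteq> p k ` I"
      proof
        fix h assume h: "h \<in> UNIV - {j k}"
        have "h \<in> p k ` {1..N}" using \<open>p k ` {1..N} = UNIV\<close> by simp
        then obtain i where "i \<in> {1..N}" "h = p k i" by blast
        then show "h \<in> p k ` I" unfolding I_def using h by auto
      qed
    qed
  qed
  have cardI: "card I = N - 1"
    using card_image[OF inj] img unfolding N_def by (simp add: card_Diff_singleton)
  have "(\<Sum>i\<in>I. \<alpha> k i * \<bar>gk k i\<bar>)\<^sup>2 = (\<Sum>i\<in>I. sqrt (\<alpha> k i) * (sqrt (\<alpha> k i) * \<bar>gk k i\<bar>))\<^sup>2"
proof -
    have "(\<Sum>i\<in>I. \<alpha> k i * \<bar>gk k i\<bar>) = (\<Sum>i\<in>I. sqrt (\<alpha> k i) * (sqrt (\<alpha> k i) * \<bar>gk k i\<bar>))"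
    proof (rule sum.cong)
      fix i assume "i \<in> I"
      then have "0 \<le> \<alpha> k i" using an IN by auto
      then show "\<alpha> k i * \<bar>gk k i\<bar> = sqrt (\<alpha> k i) * (sqrt (\<alpha> k i) * \<bar>gk k i\<bar>)"
        by (simp add: mult.assoc[symmetric])
    qed simp
    then show ?thesis by simp
  qed
  also have "\<dots> \<le> (\<Sum>i\<in>I. (sqrt (\<alpha> k i))\<^sup>2) * (\<Sum>i\<in>I. (sqrt (\<alpha> k i) * \<bar>gk k i\<bar>)\<^sup>2)"
    by (rule Cauchy_Schwarz_ineq_sum)
  also have "\<dots> = (\<Sum>i\<in>I. \<alpha> k i) * (\<Sum>i\<in>I. \<alpha> k i * (gk k i)\<^sup>2)"
proof -
    have "\<And>i. i \<in> I \<Longrightarrow> (sqrt (\<alpha> k i))\<^sup>2 = \<alpha> k i" using an IN by auto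
    moreover have "\<And>i. i \<in> I \<Longrightarrow> (sqrt (\<alpha> k i) * \<bar>gk k i\<bar>)\<^sup>2 = \<alpha> k i * (gk k i)\<^sup>2"
      using an IN by (auto simp: power_mult_distrib)
    ultimately show ?thesis by (metis (no_types, lifting) sum.cong)
  qed
  also have "\<dots> \<le> (real (card I) * Au) * (\<Sum>i\<in>{1..N}. \<alpha> k i * (gk k i)\<^sup>2)"
  proof (rule mult_mono)
    show "(\<Sum>i\<in>I. \<alpha> k i) \<le> real (card I) * Au"
      using an IN by (intro sum_bounded_above) auto
    show "(\<Sum>i\<in>I. \<alpha> k i * (gk k i)\<^sup>2) \<le> (\<Sum>i\<in>{1..N}. \<alpha> k i * (gk k i)\<^sup>2)"
      using an by (intro sum_mono2[OF _ IN]) auto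
    show "0 \<le> real (card I) * Au" using par by simp
    show "0 \<le> (\<Sum>i\<in>I. \<alpha> k i * (gk k i)\<^sup>2)" using an IN by (intro sum_nonneg) auto
  qed
  also have "real (card I) = real N - 1" using cardI n2 unfolding N_def by (simp add: of_nat_diff)
  finally show ?thesis using T unfolding N_def by simp
qed

lemma Lhat_ge: "(\<Sum>a\<in>UNIV. Lc a c) \<le> Lhat Lc"
  unfolding Lhat_def by (rule Max_ge) auto


lemma main:
  "f (x k) - f (x (Suc k)) \<ge>
     \<gamma> * (f (x (Suc k)) - Inf (f ` feas b l u))^2 /
     (Au * (real CARD('n) - 1) *
      (max (1 / Al) (Lmax Lc / (2 * \<delta> * (1 - \<gamma>))) * R0 f grad b l u (x 0)
       + 2 * Lhat Lc * R0 f grad b l u (x 0) + Gstar grad b l u)^2)"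
proof -
  define N where "N = CARD('n)"
  define M where "M = max (1 / Al) (Lmax Lc / (2 * \<delta> * (1 - \<gamma>)))"
  define R where "R = R0 f grad b l u (x 0)"
  define K where "K = M * R + 2 * Lhat Lc * R + Gstar grad b l u"
  define J where "J = j k"
  define S where "S = (\<Sum>a\<in>UNIV. Lc a J)"
  define T where "T = (\<Sum>i\<in>{1..N}. \<alpha> k i * \<bar>gk k i\<bar>)"
  define Q where "Q = (\<Sum>i\<in>{1..N}. \<alpha> k i * (gk k i)\<^sup>2)"
  define xp where "xp = x (Suc k)"
  obtain xs where xs: "xs \<in> Xstar grad b l u" "\<forall>y\<in>feas b l u. f xs \<le> f y" using xstar_exists by blast
  have xsf: "xs \<in> feas b l u" using xs unfolding Xstar_def stationary_def by simp
  have xpf: "xp \<in> feas b l u" and xpL: "xp \<in> level0 f b l u (x 0)"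
    using outer[of "Suc k"] unfolding xp_def level0_def by auto
  have fstar: "Inf (f ` feas b l u) = f xs" using xs xsf by (intro cInf_eq_minimum) auto
  define y where "y = xp - xs"
  have s0: "(\<Sum>h\<in>UNIV. y $ h) = 0" using feasS[OF xsf] feasS[OF xpf] unfolding y_def by (simp add: sum_subtractf)
  define E where "E = f xp - f xs"
  have E0: "0 \<le> E" using xs xpf unfolding E_def by simp
  have "f xs \<ge> f xp + grad xp \<bullet> (xs - xp)" by (rule grad_ineq[OF grad cvx])
  moreover have "grad xp \<bullet> (xs - xp) = - (grad xp \<bullet> y)" unfolding y_def by (simp add: inner_diff_right)
  ultimately have E1: "E \<le> grad xp \<bullet> y" unfolding E_def by simp
  have R0': "0 \<le> R" unfolding R_def by (rule R0_nonneg)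
  have yR: "norm_ex J y \<le> R" unfolding R_def y_def by (rule R0_upper[OF xpL xs(1)])
  have "grad xp \<bullet> y = (\<Sum>i\<in>{1..N}. - gk k i * pj J y $ p k i) +
    (\<Sum>m\<in>{1..N}. \<Sum>i\<in>{1..m}. (Dv grad J (z k (Suc m)) - Dv grad J (z k m)) $ p k i * pj J y $ p k i)"
    unfolding xp_def N_def J_def by (rule decomp[OF s0])
  also have "\<dots> \<le> (\<Sum>i\<in>{1..N}. M * (\<alpha> k i * \<bar>gk k i\<bar>) * R) + (\<Sum>m\<in>{1..N}. S * (\<alpha> k m * \<bar>gk k m\<bar>) * R)"
  proof (rule add_mono)
    show "(\<Sum>i\<in>{1..N}. - gk k i * pj J y $ p k i) \<le> (\<Sum>i\<in>{1..N}. M * (\<alpha> k i * \<bar>gk k i\<bar>) * R)"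
      by (rule sum_mono) (use first_bound[OF _ _ xs(1)] in \<open>auto simp: N_def M_def R_def J_def y_def xp_def\<close>)
    show "(\<Sum>m\<in>{1..N}. \<Sum>i\<in>{1..m}. (Dv grad J (z k (Suc m)) - Dv grad J (z k m)) $ p k i * pj J y $ p k i)
       \<le> (\<Sum>m\<in>{1..N}. S * (\<alpha> k m * \<bar>gk k m\<bar>) * R)"
      by (rule sum_mono) (use second_bound[OF _ _ yR[unfolded J_def]] in \<open>auto simp: N_def S_def J_def\<close>)
  qed
  also have "\<dots> = (M * R + S * R) * T"
    unfolding T_def by (simp add: sum_distrib_left sum_distrib_right sum.distrib algebra_simps)
  finally have E2: "E \<le> (M * R + S * R) * T" using E1 by simp
  have T0: "0 \<le> T" unfolding T_def using alpha_nonneg unfolding N_def by (intro sum_nonneg) auto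
  have "0 \<le> Lc a J" for a using Lc_pos Lc_diag by (cases "a = J") (auto intro: less_imp_le)
  then have S0: "0 \<le> S" unfolding S_def by (intro sum_nonneg)
  have SL: "S \<le> Lhat Lc" unfolding S_def by (rule Lhat_ge)
  have G0: "0 \<le> Gstar grad b l u" by (rule G_nonneg)
  have "S * R \<le> 2 * Lhat Lc * R" using SL S0 R0' by (intro mult_right_mono) auto
  then have MK: "M * R + S * R \<le> K" unfolding K_def using G0 by simp
  have E3: "E \<le> K * T" using E2 mult_right_mono[OF MK T0] by simp
  have "E\<^sup>2 \<le> (K * T)\<^sup>2" using E0 E3 by (intro power_mono) auto
  also have "\<dots> = K\<^sup>2 * T\<^sup>2" by (simp add: power_mult_distrib)
  also have "\<dots> \<le> K\<^sup>2 * ((real N - 1) * Au * Q)"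
    using Tsq[of k] unfolding T_def Q_def N_def by (intro mult_left_mono) auto
  finally have E4: "E\<^sup>2 \<le> K\<^sup>2 * ((real N - 1) * Au * Q)" .
  have dec: "\<gamma> * Q \<le> f (x k) - f xp" using decrease[of k] unfolding Q_def N_def xp_def by simp
  have Q0: "0 \<le> Q" unfolding Q_def using alpha_nonneg unfolding N_def by (intro sum_nonneg) auto
  define den where "den = Au * (real N - 1) * K\<^sup>2"
  have N1: "real N - 1 \<ge> 1" using n2 unfolding N_def by simp
  have den0: "0 \<le> den" unfolding den_def using par N1 by simp
  have "\<gamma> * E\<^sup>2 / den \<le> f (x k) - f xp"
  proof (cases "den = 0")
    case True
    then show ?thesis using dec Q0 par by (simp add: mult_nonneg_nonneg) (smt (verit) mult_nonneg_nonneg)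
  next
    case False
    then have dp: "den > 0" using den0 by simp
    have "\<gamma> * E\<^sup>2 \<le> \<gamma> * (K\<^sup>2 * ((real N - 1) * Au * Q))" using E4 par by (intro mult_left_mono) auto
    also have "\<dots> = den * (\<gamma> * Q)" unfolding den_def by (simp add: algebra_simps)
    also have "\<dots> \<le> den * (f (x k) - f xp)" using dec dp by (intro mult_left_mono) auto
    finally show ?thesis using dp by (simp add: pos_divide_le_eq mult.commute)
  qed
  then show ?thesis unfolding den_def E_def fstar[symmetric] K_def M_def R_def N_def xp_def .
qed

end

theorem proposition4:
  fixes f :: "real^'n::finite \<Rightarrow> real" and grad :: "real^'n \<Rightarrow> real^'n"
    and l u :: "'n \<Rightarrow> ereal" and b :: real and Lc :: "'n \<Rightarrow> 'n \<Rightarrow> real"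
    and \<tau> \<gamma> \<delta> Al Au :: real
    and x :: "nat \<Rightarrow> real^'n" and j :: "nat \<Rightarrow> 'n" and p :: "nat \<Rightarrow> nat \<Rightarrow> 'n"
    and A \<alpha> :: "nat \<Rightarrow> nat \<Rightarrow> real" and z :: "nat \<Rightarrow> nat \<Rightarrow> real^'n"
    and k :: nat
  assumes n2: "CARD('n) \<ge> 2"
    and lu: "\<forall>i. l i < u i" "\<forall>i. l i \<noteq> \<infinity>" "\<forall>i. u i \<noteq> -\<infinity>"
    and grad: "\<forall>y. (f has_derivative (\<lambda>h. grad y \<bullet> h)) (at y)"
    and grad_lip: "\<exists>L. \<forall>y w. norm (grad y - grad w) \<le> L * norm (y - w)"
    and Lc_pos: "\<forall>i i'. i \<noteq> i' \<longrightarrow> Lc i i' > 0"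
    and Lc_diag: "\<forall>i. Lc i i = 0"
    and Lc_lip: "\<forall>i i' y s t. i \<noteq> i' \<longrightarrow>
        \<bar>grad (y + s *\<^sub>R (axis i 1 - axis i' 1)) \<bullet> (axis i 1 - axis i' 1)
         - grad (y + t *\<^sub>R (axis i 1 - axis i' 1)) \<bullet> (axis i 1 - axis i' 1)\<bar> \<le> Lc i i' * \<bar>s - t\<bar>"
    and cvx: "convex_on UNIV f"
    and par: "0 < \<tau>" "\<tau> \<le> 1" "0 < \<gamma>" "\<gamma> < 1" "0 < \<delta>" "\<delta> < 1" "0 < Al" "Al \<le> Au"
    and x0: "x 0 \<in> feas b l u"
    and L0_compact: "compact (level0 f b l u (x 0))"
    and L0_ne: "level0 f b l u (x 0) \<noteq> {}"
    and L0_interior: "\<forall>y\<in>level0 f b l u (x 0). \<exists>i. l i < ereal (y$i) \<and> ereal (y$i) < u i"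
    and run: "AC2CD_run f grad l u \<tau> \<gamma> \<delta> Al Au x j p A z \<alpha>"
    and req: "\<forall>k' i. 1 \<le> i \<and> i \<le> CARD('n) + 1 \<longrightarrow>
        l (j k') < ereal (z k' i $ j k') \<and> ereal (z k' i $ j k') < u (j k')"
  shows "f (x k) - f (x (Suc k)) \<ge>
     \<gamma> * (f (x (Suc k)) - Inf (f ` feas b l u))^2 /
     (Au * (real CARD('n) - 1) *
      (max (1 / Al) (Lmax Lc / (2 * \<delta> * (1 - \<gamma>))) * R0 f grad b l u (x 0)
       + 2 * Lhat Lc * R0 f grad b l u (x 0) + Gstar grad b l u)^2)"
proof -
  interpret acd f grad l u b Lc \<tau> \<gamma> \<delta> Al Au x j p A \<alpha> z
    by (rule acd.intro[OF assms])
  show ?thesis by (rule main)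
qed
end
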